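(* Let $n\ge1$, $p\ge2$, and let $f\in\mathcal{C}^{2}(\mathbb{B}^{n})$ satisfy $\mathrm{Re}\big(f\overline{\Delta f}\big)\ge0$ in $\mathbb{B}^n$. Then $r\mapsto M_{p}^{p}(r,f)$ is increasing on $(0,1)$.
   Context: $\mathbb{B}^n$ is the open unit ball of $\mathbb{C}^n$, $d\sigma$ the normalized surface measure on $\partial\mathbb{B}^n$, $\Delta=4\sum_k\partial^2/\partial z_k\partial\overline{z}_k$, and $M_p(r,f)=\big(\int_{\partial\mathbb{B}^n}|f(r\zeta)|^pd\sigma(\zeta)\big)^{1/p}$. *)

theory Defs
  imports "HOL-Analysis.Analysis"
begin

text \<open>We model \<open>\<complex>\<^sup>n\<close> as \<open>complex ^ 'n\<close> with \<open>'n\<close> a finite type, n = CARD('n) \<ge> 1.\<close>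

definition C2_on :: "'a::euclidean_space set \<Rightarrow> ('a \<Rightarrow> 'b::real_normed_vector) \<Rightarrow> bool" where
  "C2_on S f \<longleftrightarrow> (\<exists>Df D2f.
      (\<forall>x\<in>S. (f has_derivative blinfun_apply (Df x)) (at x)) \<and>
      (\<forall>x\<in>S. (Df has_derivative blinfun_apply (D2f x)) (at x)) \<and>
      continuous_on S D2f)"

definition dir_deriv2 :: "('a::real_normed_vector \<Rightarrow> 'b::real_normed_vector) \<Rightarrow> 'a \<Rightarrow> 'a \<Rightarrow> 'b" where
  "dir_deriv2 f x v =
     vector_derivative (\<lambda>t. vector_derivative (\<lambda>s. f (x + s *\<^sub>R v)) (at t)) (at 0)"

(* Delta = 4 sum_k d^2/dz_k dzbar_k = sum_k (d^2/dx_k^2 + d^2/dy_k^2), z_k = x_k + i y_k *)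
definition laplacian :: "(complex ^ 'n \<Rightarrow> complex) \<Rightarrow> complex ^ 'n \<Rightarrow> complex" where
  "laplacian f z = (\<Sum>k\<in>UNIV. dir_deriv2 f z (axis k 1) + dir_deriv2 f z (axis k \<i>))"

text \<open>Normalized surface measure on the unit sphere, realised as the (normalized) cone
  measure: push-forward of the normalized Lebesgue measure of the unit ball under x \<mapsto> x/|x|.\<close>
definition sphere_measure :: "'a::euclidean_space measure" where
  "sphere_measure = distr (uniform_measure lborel (ball 0 1)) borel (\<lambda>x. x /\<^sub>R norm x)"

definition Mp_pow :: "real \<Rightarrow> real \<Rightarrow> ('a::euclidean_space \<Rightarrow> complex) \<Rightarrow> real" where
  "Mp_pow p r f = (\<integral>\<zeta>. (cmod (f (r *\<^sub>R \<zeta>))) powr p \<partial>sphere_measure)"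

end

theory Submission
  imports Defs
begin


lemma integral_translate_lborel:
  fixes g :: "'a::euclidean_space \<Rightarrow> real"
  assumes "g \<in> borel_measurable borel"
  shows "integral\<^sup>L lborel (\<lambda>x. g (x + c)) = integral\<^sup>L lborel g"
proof -
  have "integral\<^sup>L lborel g = integral\<^sup>L (distr lborel borel ((+) c)) g"
    by (simp add: lborel_distr_plus)
  also have "\<dots> = integral\<^sup>L lborel (\<lambda>x. g (c + x))"
    by (rule integral_distr) (auto simp: assms)
  finally show ?thesis by (simp add: add.commute)
qed

lemma integrable_cont_compact_support:
  fixes g :: "'a::euclidean_space \<Rightarrow> real"
  assumes "continuous_on UNIV g" "compact K" "\<And>x. x \<notin> K \<Longrightarrow> g x = 0"
  shows "integrable lborel g"
proof -
  have "integrable lborel (\<lambda>x. indicator K x *\<^sub>R g x)"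
    by (rule borel_integrable_compact) (use assms continuous_on_subset[OF assms(1)] in auto)
  moreover have "(\<lambda>x. indicator K x *\<^sub>R g x) = g"
    using assms(3) by (force simp: indicator_def fun_eq_iff)
  ultimately show ?thesis by simp
qed

lemma line_deriv_shift:
  fixes g g' :: "'a::real_normed_vector \<Rightarrow> real"
  assumes "\<And>x. ((\<lambda>t. g (x + t *\<^sub>R b)) has_real_derivative g' x) (at 0)"
  shows "((\<lambda>t. g (x + t *\<^sub>R b)) has_real_derivative g' (x + s *\<^sub>R b)) (at s)"
proof -
  have "((\<lambda>t. g ((x + s *\<^sub>R b) + t *\<^sub>R b)) has_real_derivative g' (x + s *\<^sub>R b)) (at 0)"
    by (rule assms)
  then have "((\<lambda>t. g (x + (t + s) *\<^sub>R b)) has_real_derivative g' (x + s *\<^sub>R b)) (at 0)"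
    by (simp add: algebra_simps)
  then show ?thesis
    using DERIV_shift[of "\<lambda>t. g (x + t *\<^sub>R b)" "g' (x + s *\<^sub>R b)" 0 s] by simp
qed

lemma line_MVT:
  fixes g g' :: "'a::real_normed_vector \<Rightarrow> real"
  assumes "\<And>x. ((\<lambda>t. g (x + t *\<^sub>R b)) has_real_derivative g' x) (at 0)"
    and "t \<noteq> 0"
  shows "\<exists>\<xi>. \<bar>\<xi>\<bar> \<le> \<bar>t\<bar> \<and> g (x + t *\<^sub>R b) - g x = t * g' (x + \<xi> *\<^sub>R b)"
proof (cases "t > 0")
  case True
  from MVT2[of 0 t "\<lambda>t. g (x + t *\<^sub>R b)" "\<lambda>s. g' (x + s *\<^sub>R b)"] True
    line_deriv_shift[OF assms(1)]
  obtain z where "0 < z" "z < t" "g (x + t *\<^sub>R b) - g (x + 0 *\<^sub>R b) = (t - 0) * g' (x + z *\<^sub>R b)"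
    by blast
  then show ?thesis by (intro exI[of _ z]) auto
next
  case False
  then have "t < 0" using assms(2) by simp
  from MVT2[of t 0 "\<lambda>t. g (x + t *\<^sub>R b)" "\<lambda>s. g' (x + s *\<^sub>R b)"] this
    line_deriv_shift[OF assms(1)]
  obtain z where "t < z" "z < 0" "g (x + 0 *\<^sub>R b) - g (x + t *\<^sub>R b) = (0 - t) * g' (x + z *\<^sub>R b)"
    by blast
  then show ?thesis by (intro exI[of _ z]) (auto simp: algebra_simps)
qed

lemma aux_lt: "(x::real) \<ge> 0 \<Longrightarrow> x < 2 * (x + 1)" by (simp add: algebra_simps)

lemma line_ibp:
  fixes g g' :: "'a::euclidean_space \<Rightarrow> real"
  assumes contg: "continuous_on UNIV g" and contg': "continuous_on UNIV g'"
    and der: "\<And>x. ((\<lambda>t. g (x + t *\<^sub>R b)) has_real_derivative g' x) (at 0)"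
    and K: "compact K" and supp: "\<And>x. x \<notin> K \<Longrightarrow> g x = 0 \<and> g' x = 0"
  shows "integral\<^sup>L lborel g' = 0"
proof -
  obtain R where R: "K \<subseteq> cball 0 R" "R \<ge> 0"
    using K compact_imp_bounded bounded_subset_cball by (metis order.trans cball_subset_cball_iff le_cases)
  define C1 where "C1 = cball (0::'a) (R + norm b)"
  define C2 where "C2 = cball (0::'a) (R + 2 * norm b + 1)"
  have ig: "integrable lborel g" using integrable_cont_compact_support[OF contg K] supp by blast
  have ig': "integrable lborel g'" using integrable_cont_compact_support[OF contg' K] supp by blast
  have gm: "g \<in> borel_measurable borel" using contg by (simp add: borel_measurable_continuous_onI)
  have uc: "uniformly_continuous_on C2 g'"
    by (rule compact_uniformly_continuous) (use contg' continuous_on_subset C2_def in auto)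
  have fin: "emeasure lborel C1 < \<infinity>" unfolding C1_def by (rule emeasure_lborel_cball_finite)
  have mC1: "0 \<le> measure lborel C1" by simp
  have mlt: "measure lborel C1 < 2 * (measure lborel C1 + 1)" using mC1 by (metis aux_lt)
  show ?thesis
  proof (rule ccontr)
    assume ne: "integral\<^sup>L lborel g' \<noteq> 0"
    define \<eta> where "\<eta> = \<bar>integral\<^sup>L lborel g'\<bar> / (2 * (measure lborel C1 + 1))"
    have m1: "2 * (measure lborel C1 + 1) > 0" using mC1 by (metis add_nonneg_pos mult_pos_pos zero_less_numeral zero_less_one)
    have \<eta>pos: "\<eta> > 0" using ne m1 unfolding \<eta>_def by (intro divide_pos_pos) auto
    obtain d where d: "d > 0" "\<And>x y. x \<in> C2 \<Longrightarrow> y \<in> C2 \<Longrightarrow> dist y x < d \<Longrightarrow> dist (g' y) (g' x) < \<eta>"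
      using uc \<eta>pos unfolding uniformly_continuous_on_def by metis
    define t where "t = min 1 (d / (2 * (norm b + 1)))"
    have nb1: "2 * (norm b + 1) > 0" by (metis add_nonneg_pos mult_pos_pos norm_ge_zero zero_less_numeral zero_less_one)
    have dq: "d / (2 * (norm b + 1)) > 0" using d(1) nb1 by (rule divide_pos_pos)
    have tpos: "t > 0" unfolding t_def using dq by simp
    have tle: "t \<le> 1" by (simp add: t_def)
    have tb: "t * norm b < d"
    proof -
      have "t * norm b \<le> d / (2 * (norm b + 1)) * norm b"
        by (rule mult_right_mono) (auto simp: t_def)
      also have "\<dots> = d * (norm b / (2 * (norm b + 1)))" by simp
      also have "\<dots> < d * 1"
        using d(1) nb1 by (intro mult_strict_left_mono) (simp_all add: divide_less_eq)
      finally show ?thesis by simp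
    qed
    define DQ where "DQ x = (g (x + t *\<^sub>R b) - g x) / t" for x
    have bound: "\<bar>g' x - DQ x\<bar> \<le> \<eta> * indicator C1 x" for x
    proof -
      obtain \<xi> where xi: "\<bar>\<xi>\<bar> \<le> \<bar>t\<bar>" "g (x + t *\<^sub>R b) - g x = t * g' (x + \<xi> *\<^sub>R b)"
        using line_MVT[OF der, of t x] tpos by auto
      have DQx: "DQ x = g' (x + \<xi> *\<^sub>R b)" using xi tpos by (simp add: DQ_def)
      have nxi: "norm (\<xi> *\<^sub>R b) \<le> t * norm b" using xi tpos
        by (simp add: mult_right_mono)
      show ?thesis
      proof (cases "x \<in> C1")
        case True
        then have nx: "norm x \<le> R + norm b" unfolding C1_def by simp
        have tnb: "t * norm b \<le> norm b" using tle tpos by (simp add: mult_left_le_one_le)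
        have "norm (x + \<xi> *\<^sub>R b) \<le> norm x + norm (\<xi> *\<^sub>R b)" by (rule norm_triangle_ineq)
        then have "norm (x + \<xi> *\<^sub>R b) \<le> R + 2 * norm b + 1" using nx nxi tnb by linarith
        moreover have "norm x \<le> R + 2 * norm b + 1" using nx norm_ge_zero[of b] by linarith
        ultimately have "x \<in> C2" "x + \<xi> *\<^sub>R b \<in> C2" unfolding C2_def by auto
        moreover have "dist (x + \<xi> *\<^sub>R b) x < d" using nxi tb by (simp add: dist_norm)
        ultimately have "dist (g' (x + \<xi> *\<^sub>R b)) (g' x) < \<eta>" using d(2) by blast
        then show ?thesis using True DQx by (simp add: dist_real_def abs_minus_commute)
      next
        case False
        then have nx: "norm x > R + norm b" unfolding C1_def by simp
        have "norm x > R" using nx norm_ge_zero[of b] by linarith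
        then have "x \<notin> cball 0 R" by simp
        then have "x \<notin> K" using R by auto
        moreover have "x + \<xi> *\<^sub>R b \<notin> K"
        proof
          assume "x + \<xi> *\<^sub>R b \<in> K"
          then have "norm (x + \<xi> *\<^sub>R b) \<le> R" using R by auto
          moreover have "norm (x + \<xi> *\<^sub>R b) \<ge> norm x - norm (\<xi> *\<^sub>R b)"
            by (metis norm_diff_ineq norm_minus_cancel diff_minus_eq_add)
          moreover have "t * norm b \<le> norm b" using tle tpos by (simp add: mult_left_le_one_le)
          ultimately show False using nx nxi by linarith
        qed
        ultimately show ?thesis using supp DQx False by auto
      qed
    qed
    have igt: "integrable lborel (\<lambda>x. g (x + t *\<^sub>R b))"
      proof -
        have "integrable (distr lborel borel ((+) (t *\<^sub>R b))) g" using ig by (simp add: lborel_distr_plus)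
        then have "integrable lborel (\<lambda>x. g (t *\<^sub>R b + x))"
          by (subst (asm) integrable_distr_eq) (auto simp: gm)
        then show ?thesis by (simp add: add.commute)
      qed
    have iDQ: "integrable lborel DQ" unfolding DQ_def using ig igt by auto
    have iDQ0: "integral\<^sup>L lborel DQ = 0"
    proof -
      have "integral\<^sup>L lborel DQ = (integral\<^sup>L lborel (\<lambda>x. g (x + t *\<^sub>R b)) - integral\<^sup>L lborel g) / t"
        unfolding DQ_def
        using igt ig by (simp add: DQ_def)
      also have "\<dots> = 0" using integral_translate_lborel[OF gm] by simp
      finally show ?thesis .
    qed
    have "\<bar>integral\<^sup>L lborel g'\<bar> = \<bar>integral\<^sup>L lborel (\<lambda>x. g' x - DQ x)\<bar>"
      using ig' iDQ iDQ0 by simp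
    also have "\<dots> \<le> integral\<^sup>L lborel (\<lambda>x. \<eta> * indicator C1 x)"
      by (rule integral_abs_bound_integral)
         (use ig' iDQ fin bound in \<open>auto simp: C1_def intro!: integrable_real_mult_indicator\<close>)
    also have "\<dots> = \<eta> * measure lborel C1" using fin by (simp add: C1_def)
    also have "\<dots> < \<bar>integral\<^sup>L lborel g'\<bar>"
    proof -
      have "\<eta> * measure lborel C1 < \<eta> * (2 * (measure lborel C1 + 1))"
        by (rule mult_strict_left_mono[OF mlt \<eta>pos])
      also have "\<dots> = \<bar>integral\<^sup>L lborel g'\<bar>" unfolding \<eta>_def using m1 by simp
      finally show ?thesis .
    qed
    finally show False by simp
  qed
qed


lemma line_deriv_zero_open:
  fixes h :: "'a::real_normed_vector \<Rightarrow> real"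
  assumes "open S" "x \<in> S" "\<And>y. y \<in> S \<Longrightarrow> h y = 0"
  shows "((\<lambda>t. h (x + t *\<^sub>R b)) has_real_derivative 0) (at 0)"
proof -
  have c: "continuous_on UNIV (\<lambda>t::real. x + t *\<^sub>R b)" by (intro continuous_intros)
  have op: "open ((\<lambda>t::real. x + t *\<^sub>R b) -` S)"
    using assms(1) by (intro continuous_open_vimage) (auto intro!: continuous_intros)
  show ?thesis
    by (rule has_field_derivative_transform_within_open[of "\<lambda>_. 0" 0 0 "(\<lambda>t::real. x + t *\<^sub>R b) -` S"])
       (use op assms in auto)
qed

lemma cont_glue:
  fixes h :: "'a::topological_space \<Rightarrow> real"
  assumes "open U" "closed K" "K \<subseteq> U" "continuous_on U h" "\<And>x. x \<notin> K \<Longrightarrow> h x = 0"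
  shows "continuous_on UNIV h"
proof -
  have "continuous_on (- K) h"
    by (rule continuous_on_eq[of _ "\<lambda>_. 0"]) (use assms in auto)
  then have "continuous_on (U \<union> - K) h"
    using assms by (intro continuous_on_open_Un) auto
  moreover have "U \<union> - K = UNIV" using assms by auto
  ultimately show ?thesis by simp
qed

lemma green:
  fixes u \<phi> :: "'a::euclidean_space \<Rightarrow> real" and u1 u2 \<phi>1 \<phi>2 :: "'a \<Rightarrow> 'a \<Rightarrow> real"
  assumes U: "open U" and K: "compact K" "K \<subseteq> U"
    and uc: "continuous_on U u" "\<And>b. b \<in> Basis \<Longrightarrow> continuous_on U (u1 b)"
      "\<And>b. b \<in> Basis \<Longrightarrow> continuous_on U (u2 b)"
    and ud1: "\<And>b x. b \<in> Basis \<Longrightarrow> x \<in> U \<Longrightarrow> ((\<lambda>t. u (x + t *\<^sub>R b)) has_real_derivative u1 b x) (at 0)"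
    and ud2: "\<And>b x. b \<in> Basis \<Longrightarrow> x \<in> U \<Longrightarrow> ((\<lambda>t. u1 b (x + t *\<^sub>R b)) has_real_derivative u2 b x) (at 0)"
    and pc: "continuous_on UNIV \<phi>" "\<And>b. b \<in> Basis \<Longrightarrow> continuous_on UNIV (\<phi>1 b)"
      "\<And>b. b \<in> Basis \<Longrightarrow> continuous_on UNIV (\<phi>2 b)"
    and pd1: "\<And>b x. b \<in> Basis \<Longrightarrow> ((\<lambda>t. \<phi> (x + t *\<^sub>R b)) has_real_derivative \<phi>1 b x) (at 0)"
    and pd2: "\<And>b x. b \<in> Basis \<Longrightarrow> ((\<lambda>t. \<phi>1 b (x + t *\<^sub>R b)) has_real_derivative \<phi>2 b x) (at 0)"
    and psupp: "\<And>b x. b \<in> Basis \<Longrightarrow> x \<notin> K \<Longrightarrow> \<phi> x = 0 \<and> \<phi>1 b x = 0 \<and> \<phi>2 b x = 0"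
  shows "integral\<^sup>L lborel (\<lambda>x. u x * (\<Sum>b\<in>Basis. \<phi>2 b x))
       = integral\<^sup>L lborel (\<lambda>x. \<phi> x * (\<Sum>b\<in>Basis. u2 b x))"
proof -
  have ps0: "\<phi> x = 0" if "x \<notin> K" for x
    using psupp[of "SOME b. b \<in> Basis" x] that by (metis someI_ex nonempty_Basis ex_in_conv)
  have clK: "closed K" using K compact_imp_closed by auto
  define g where "g b x = u x * \<phi>1 b x - \<phi> x * u1 b x" for b x
  define g' where "g' b x = u x * \<phi>2 b x - \<phi> x * u2 b x" for b x
  have gz: "g b x = 0 \<and> g' b x = 0" if "b \<in> Basis" "x \<notin> K" for b x
    using psupp[OF that] by (simp add: g_def g'_def)
  have pcU: "continuous_on U \<phi>" "continuous_on U (\<phi>1 b)" "continuous_on U (\<phi>2 b)" if "b \<in> Basis" for b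
    using pc that continuous_on_subset by blast+
  have pcU0: "continuous_on U \<phi>" using pc(1) continuous_on_subset by blast
  have cg: "continuous_on UNIV (g b)" if b: "b \<in> Basis" for b
  proof (rule cont_glue[OF U clK K(2)])
    show "continuous_on U (g b)" unfolding g_def
      using uc b pcU
      by (intro continuous_intros) auto
  qed (use gz b in auto)
  have cg': "continuous_on UNIV (g' b)" if b: "b \<in> Basis" for b
  proof (rule cont_glue[OF U clK K(2)])
    show "continuous_on U (g' b)" unfolding g'_def
      using uc b pcU
      by (intro continuous_intros) auto
  qed (use gz b in auto)
  have dg: "((\<lambda>t. g b (x + t *\<^sub>R b)) has_real_derivative g' b x) (at 0)" if b: "b \<in> Basis" for b x
  proof (cases "x \<in> U")
    case True
    have "((\<lambda>t. u (x + t *\<^sub>R b) * \<phi>1 b (x + t *\<^sub>R b) - \<phi> (x + t *\<^sub>R b) * u1 b (x + t *\<^sub>R b))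
        has_real_derivative ((u1 b x * \<phi>1 b (x + 0 *\<^sub>R b) + \<phi>2 b x * u (x + 0 *\<^sub>R b))
           - (\<phi>1 b x * u1 b (x + 0 *\<^sub>R b) + u2 b x * \<phi> (x + 0 *\<^sub>R b)))) (at 0)"
      by (intro DERIV_diff DERIV_mult ud1[OF b True] ud2[OF b True] pd1[OF b] pd2[OF b])
    then show ?thesis by (simp add: g_def g'_def algebra_simps)
  next
    case False
    then have xK: "x \<notin> K" using K by auto
    have "((\<lambda>t. g b (x + t *\<^sub>R b)) has_real_derivative 0) (at 0)"
      by (rule line_deriv_zero_open[of "- K"]) (use clK xK gz b in auto)
    then show ?thesis using gz b xK by simp
  qed
  have z: "integral\<^sup>L lborel (g' b) = 0" if b: "b \<in> Basis" for b
    by (rule line_ibp[OF cg[OF b] cg'[OF b] dg[OF b] K(1)]) (use gz b in auto)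
  have ig': "integrable lborel (g' b)" if b: "b \<in> Basis" for b
    by (rule integrable_cont_compact_support[OF cg'[OF b] K(1)]) (use gz b in auto)
  have i1: "integrable lborel (\<lambda>x. u x * (\<Sum>b\<in>Basis. \<phi>2 b x))"
  proof (rule integrable_cont_compact_support[OF _ K(1)])
    show "continuous_on UNIV (\<lambda>x. u x * (\<Sum>b\<in>Basis. \<phi>2 b x))"
    proof (rule cont_glue[OF U clK K(2)])
      show "continuous_on U (\<lambda>x. u x * (\<Sum>b\<in>Basis. \<phi>2 b x))"
        using uc pcU by (intro continuous_intros) auto
    qed (use psupp in auto)
  qed (use psupp in auto)
  have i2: "integrable lborel (\<lambda>x. \<phi> x * (\<Sum>b\<in>Basis. u2 b x))"
  proof (rule integrable_cont_compact_support[OF _ K(1)])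
    show "continuous_on UNIV (\<lambda>x. \<phi> x * (\<Sum>b\<in>Basis. u2 b x))"
    proof (rule cont_glue[OF U clK K(2)])
      show "continuous_on U (\<lambda>x. \<phi> x * (\<Sum>b\<in>Basis. u2 b x))"
        using uc pcU0 by (intro continuous_intros) auto
    qed (use ps0 in auto)
  qed (use ps0 in auto)
  have eqf: "(\<lambda>x. u x * (\<Sum>b\<in>Basis. \<phi>2 b x) - \<phi> x * (\<Sum>b\<in>Basis. u2 b x)) = (\<lambda>x. \<Sum>b\<in>Basis. g' b x)"
    by (auto simp: g'_def sum_subtractf sum_distrib_left)
  have "integral\<^sup>L lborel (\<lambda>x. u x * (\<Sum>b\<in>Basis. \<phi>2 b x)) - integral\<^sup>L lborel (\<lambda>x. \<phi> x * (\<Sum>b\<in>Basis. u2 b x))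
      = integral\<^sup>L lborel (\<lambda>x. u x * (\<Sum>b\<in>Basis. \<phi>2 b x) - \<phi> x * (\<Sum>b\<in>Basis. u2 b x))"
    using i1 i2 by simp
  also have "\<dots> = integral\<^sup>L lborel (\<lambda>x. \<Sum>b\<in>Basis. g' b x)" using eqf by simp
  also have "\<dots> = (\<Sum>b\<in>Basis. integral\<^sup>L lborel (g' b))"
    by (rule Bochner_Integration.integral_sum[OF ig'])
  also have "\<dots> = 0" using z by simp
  finally show ?thesis by simp
qed


lemma measure_eqI_lessThan':
  fixes M N :: "real measure"
  assumes sets: "sets M = sets borel" "sets N = sets borel"
  assumes fin: "\<And>x. emeasure M {..< x} < \<infinity>"
  assumes "\<And>x. emeasure M {..< x} = emeasure N {..< x}"
  shows "M = N"
proof (rule measure_eqI_generator_eq_countable)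
  let ?LT = "\<lambda>a::real. {..< a}" let ?E = "range ?LT"
  show "Int_stable ?E"
  proof (unfold Int_stable_def, clarify)
    fix a b :: real
    have "{..<a} \<inter> {..<b} = {..<min a b}" by auto
    then show "{..<a} \<inter> {..<b} \<in> ?E" by blast
  qed
  show "?E \<subseteq> Pow UNIV" "sets M = sigma_sets UNIV ?E" "sets N = sigma_sets UNIV ?E"
    unfolding sets borel_Iio by auto
  show "?LT`Rats \<subseteq> ?E" "(\<Union>i\<in>Rats. ?LT i) = UNIV" "\<And>a. a \<in> ?LT`Rats \<Longrightarrow> emeasure M a \<noteq> \<infinity>"
    using fin by (auto simp: less_top) (metis Rats_of_int ex_less_of_int)
qed (auto intro: assms countable_rat)

lemma scale_cone:
  fixes E :: "'a::euclidean_space set"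
  assumes a: "a > 0" and E: "E \<in> sets borel"
  shows "emeasure lborel {x::'a. norm x < a \<and> x /\<^sub>R norm x \<in> E}
       = ennreal (a ^ DIM('a)) * emeasure lborel {y. norm y < 1 \<and> y /\<^sub>R norm y \<in> E}"
proof -
  have m: "(\<lambda>x::'a. x /\<^sub>R norm x) \<in> borel_measurable borel" by measurable
  have S: "{x::'a. norm x < a \<and> x /\<^sub>R norm x \<in> E} \<in> sets borel"
    using m E by measurable
  have pre: "(\<lambda>x::'a. 0 + a *\<^sub>R x) -` {x::'a. norm x < a \<and> x /\<^sub>R norm x \<in> E}
        = {y. norm y < 1 \<and> y /\<^sub>R norm y \<in> E}"
    using a by (auto simp: field_simps)
  have "emeasure lborel {x::'a. norm x < a \<and> x /\<^sub>R norm x \<in> E}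
      = emeasure (density (distr lborel borel (\<lambda>x::'a. 0 + a *\<^sub>R x)) (\<lambda>_. \<bar>a\<bar>^DIM('a)))
          {x::'a. norm x < a \<and> x /\<^sub>R norm x \<in> E}"
    using lborel_affine[of a "0::'a"] a by simp
  also have "\<dots> = ennreal (\<bar>a\<bar>^DIM('a)) * emeasure (distr lborel borel (\<lambda>x::'a. 0 + a *\<^sub>R x))
          {x::'a. norm x < a \<and> x /\<^sub>R norm x \<in> E}"
    using S by (subst emeasure_density) (auto simp: nn_integral_cmult_indicator)
  also have "\<dots> = ennreal (\<bar>a\<bar>^DIM('a)) * emeasure lborel ((\<lambda>x::'a. 0 + a *\<^sub>R x) -` {x::'a. norm x < a \<and> x /\<^sub>R norm x \<in> E} \<inter> space lborel)"
    using S by (subst emeasure_distr) auto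
  also have "\<dots> = ennreal (a ^ DIM('a)) * emeasure lborel {y. norm y < 1 \<and> y /\<^sub>R norm y \<in> E}"
    unfolding pre using a by simp
  finally show ?thesis .
qed


definition nu :: "nat \<Rightarrow> real measure" where
  "nu d = density lborel (\<lambda>s. ennreal (indicator {0..1} s * (real d * s ^ (d - 1))))"

lemma sets_nu[simp, measurable_cong]: "sets (nu d) = sets borel"
  by (simp add: nu_def)

lemma space_nu[simp]: "space (nu d) = UNIV"
  by (simp add: nu_def)

lemma nu_Icc:
  assumes "d \<ge> 1" "0 \<le> c" "c \<le> 1"
  shows "(\<integral>\<^sup>+s. ennreal (indicator {0..1} s * (real d * s ^ (d - 1))) * indicator {0..c} s \<partial>lborel) = ennreal (c ^ d)"
proof -
  have "(\<integral>\<^sup>+s. ennreal (indicator {0..1} s * (real d * s ^ (d - 1))) * indicator {0..c} s \<partial>lborel)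
      = (\<integral>\<^sup>+s. ennreal (real d * s ^ (d - 1)) * indicator {0..c} s \<partial>lborel)"
    using assms by (intro nn_integral_cong) (auto simp: indicator_def)
  also have "\<dots> = ennreal (c ^ d - 0 ^ d)"
  proof (rule nn_integral_FTC_Icc)
    show "(\<lambda>s. real d * s ^ (d - 1)) \<in> borel_measurable borel" by measurable
    show "((\<lambda>s. s ^ d) has_real_derivative real d * x ^ (d - 1)) (at x)" for x
      by (rule derivative_eq_intros refl)+ simp
    show "0 \<le> real d * x ^ (d - 1)" if "x \<in> {0..c}" for x using that by simp
  qed (use assms in auto)
  also have "\<dots> = ennreal (c ^ d)" using assms by simp
  finally show ?thesis .
qed

lemma emeasure_nu_lessThan:
  assumes "d \<ge> 1"
  shows "emeasure (nu d) {..<a} = ennreal ((max 0 (min a 1)) ^ d)"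
proof (cases "a \<le> 0")
  case True
  have eq: "ennreal (indicator {0..1} s * (real d * s ^ (d - 1))) * indicator {..<a} s = 0" for s
    using True by (auto simp: indicator_def)
  have "emeasure (nu d) {..<a} = 0"
    unfolding nu_def by (subst emeasure_density) (simp_all only: eq, auto)
  then show ?thesis using True assms by simp
next
  case False
  define c where "c = min a 1"
  have c: "0 < c" "c \<le> 1" using False by (auto simp: c_def)
  have "emeasure (nu d) {..<a} = (\<integral>\<^sup>+s. ennreal (indicator {0..1} s * (real d * s ^ (d - 1))) * indicator {..<a} s \<partial>lborel)"
    unfolding nu_def by (subst emeasure_density) (auto simp: mult.commute)
  also have "\<dots> = (\<integral>\<^sup>+s. ennreal (indicator {0..1} s * (real d * s ^ (d - 1))) * indicator {0..c} s \<partial>lborel)"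
  proof (rule nn_integral_cong_AE)
    show "AE s in lborel. ennreal (indicator {0..1} s * (real d * s ^ (d - 1))) * indicator {..<a} s
        = ennreal (indicator {0..1} s * (real d * s ^ (d - 1))) * indicator {0..c} s"
      using AE_lborel_singleton[of c]
    proof eventually_elim
      case (elim s)
      then show ?case using c False by (auto simp: indicator_def c_def)
    qed
  qed
  also have "\<dots> = ennreal (c ^ d)" using nu_Icc[OF assms] c by simp
  finally show ?thesis using c by (simp add: c_def)
qed

lemma emeasure_nu_UNIV: "d \<ge> 1 \<Longrightarrow> emeasure (nu d) UNIV = 1"
proof -
  assume d: "d \<ge> 1"
  have "emeasure (nu d) UNIV = (\<integral>\<^sup>+s. ennreal (indicator {0..1} s * (real d * s ^ (d - 1))) * indicator {0..1} s \<partial>lborel)"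
    unfolding nu_def by (subst emeasure_density) (auto intro!: nn_integral_cong simp: indicator_def)
  also have "\<dots> = 1" using nu_Icc[OF d, of 1] by simp
  finally show ?thesis .
qed

lemma finite_measure_nu: "d \<ge> 1 \<Longrightarrow> finite_measure (nu d)"
  by (rule finite_measureI) (simp add: emeasure_nu_UNIV)


lemma cone_meas:
  fixes E :: "'a::euclidean_space set"
  assumes E: "E \<in> sets borel"
  shows "emeasure (uniform_measure lborel (ball (0::'a) 1)) ({x. norm x < a} \<inter> {x. x /\<^sub>R norm x \<in> E})
       = ennreal ((max 0 (min a 1)) ^ DIM('a)) * emeasure (uniform_measure lborel (ball (0::'a) 1)) {x. x /\<^sub>R norm x \<in> E}"
proof -
  have m: "(\<lambda>x::'a. x /\<^sub>R norm x) \<in> borel_measurable borel" by measurable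
  have C: "{x::'a. x /\<^sub>R norm x \<in> E} \<in> sets borel" using m E by measurable
  have L: "{x::'a. norm x < a} \<in> sets borel" by measurable
  have e1: "emeasure (uniform_measure lborel (ball (0::'a) 1)) ({x. norm x < a} \<inter> {x. x /\<^sub>R norm x \<in> E})
      = emeasure lborel (ball 0 1 \<inter> ({x. norm x < a} \<inter> {x. x /\<^sub>R norm x \<in> E})) / emeasure lborel (ball (0::'a) 1)"
    using C L by (subst emeasure_uniform_measure) auto
  have e2: "emeasure (uniform_measure lborel (ball (0::'a) 1)) {x. x /\<^sub>R norm x \<in> E}
      = emeasure lborel (ball 0 1 \<inter> {x. x /\<^sub>R norm x \<in> E}) / emeasure lborel (ball (0::'a) 1)"
    using C by (subst emeasure_uniform_measure) auto
  show ?thesis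
  proof (cases "a \<le> 0")
    case True
    then have "ball 0 1 \<inter> ({x::'a. norm x < a} \<inter> {x. x /\<^sub>R norm x \<in> E}) = {}"
      by auto (meson norm_ge_zero order_le_less_trans not_le)
    then show ?thesis using True e1 by simp
  next
    case False
    define c where "c = min a 1"
    have c: "0 < c" "c \<le> 1" using False by (auto simp: c_def)
    have s1: "ball 0 1 \<inter> ({x::'a. norm x < a} \<inter> {x. x /\<^sub>R norm x \<in> E}) = {x. norm x < c \<and> x /\<^sub>R norm x \<in> E}"
      by (auto simp: c_def)
    have s2: "ball 0 1 \<inter> {x::'a. x /\<^sub>R norm x \<in> E} = {x. norm x < 1 \<and> x /\<^sub>R norm x \<in> E}"
      by auto
    have "emeasure (uniform_measure lborel (ball (0::'a) 1)) ({x. norm x < a} \<inter> {x. x /\<^sub>R norm x \<in> E})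
        = ennreal (c ^ DIM('a)) * emeasure lborel {x::'a. norm x < 1 \<and> x /\<^sub>R norm x \<in> E} / emeasure lborel (ball (0::'a) 1)"
      unfolding e1 s1 using scale_cone[OF c(1) E] by simp
    also have "\<dots> = ennreal (c ^ DIM('a)) * emeasure (uniform_measure lborel (ball (0::'a) 1)) {x. x /\<^sub>R norm x \<in> E}"
      unfolding e2 s2 by (simp add: ennreal_times_divide)
    finally show ?thesis using c by (simp add: c_def)
  qed
qed


abbreviation "unifB \<equiv> uniform_measure lborel (ball (0::'a::euclidean_space) 1)"

lemma emeasure_unifB_space: "emeasure (uniform_measure lborel (ball (0::'a::euclidean_space) 1)) UNIV = 1"
proof -
  have "emeasure lborel (ball (0::'a) 1) \<noteq> 0"
    using content_ball_pos[of "1::real" "0::'a"] emeasure_lborel_ball_finite[of "0::'a" 1]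
    by (metis emeasure_eq_ennreal_measure ennreal_eq_0_iff less_le not_le zero_less_one top.not_eq_extremum)
  moreover have "emeasure lborel (ball (0::'a) 1) \<noteq> \<infinity>"
    using emeasure_lborel_ball_finite[of "0::'a" 1] by simp
  ultimately show ?thesis
    by (subst emeasure_uniform_measure) (auto simp: less_top)
qed

lemma finite_measure_unifB: "finite_measure (uniform_measure lborel (ball (0::'a::euclidean_space) 1))"
  by (rule finite_measureI) (simp add: emeasure_unifB_space)

lemma sets_sphere_measure[simp, measurable_cong]: "sets (sphere_measure :: 'a::euclidean_space measure) = sets borel"
  by (simp add: sphere_measure_def)

lemma space_sphere_measure[simp]: "space (sphere_measure :: 'a::euclidean_space measure) = UNIV"
  by (simp add: sphere_measure_def)

lemma finite_measure_sphere: "finite_measure (sphere_measure :: 'a::euclidean_space measure)"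
  unfolding sphere_measure_def
  by (rule finite_measure.finite_measure_distr[OF finite_measure_unifB]) measurable

lemma emeasure_sphere_cone:
  assumes "E \<in> sets borel"
  shows "emeasure (sphere_measure :: 'a::euclidean_space measure) E = emeasure (unifB :: 'a measure) {x. x /\<^sub>R norm x \<in> E}"
  unfolding sphere_measure_def using assms
  by (subst emeasure_distr) (auto simp: vimage_def)

lemma polar_pair:
  "nu DIM('a) \<Otimes>\<^sub>M (sphere_measure :: 'a::euclidean_space measure)
     = distr (unifB :: 'a measure) (borel \<Otimes>\<^sub>M borel) (\<lambda>x. (norm x, x /\<^sub>R norm x))"
proof (rule pair_measure_eqI)
  have d: "DIM('a) \<ge> 1" using DIM_positive[where 'a='a] by linarith
  interpret N: finite_measure "nu DIM('a)" using finite_measure_nu[OF d] .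
  interpret S: finite_measure "sphere_measure :: 'a measure" by (rule finite_measure_sphere)
  show "sigma_finite_measure (nu DIM('a))" ..
  show "sigma_finite_measure (sphere_measure :: 'a measure)" ..
  show "sets (nu DIM('a) \<Otimes>\<^sub>M (sphere_measure :: 'a measure)) = sets (distr (unifB :: 'a measure) (borel \<Otimes>\<^sub>M borel) (\<lambda>x. (norm x, x /\<^sub>R norm x)))"
    by (simp cong: sets_pair_measure_cong)
  fix A E assume A: "A \<in> sets (nu DIM('a))" and E: "E \<in> sets (sphere_measure :: 'a measure)"
  then have A': "A \<in> sets borel" and E': "E \<in> sets borel" by auto
  have mT: "(\<lambda>x::'a. (norm x, x /\<^sub>R norm x)) \<in> measurable borel (borel \<Otimes>\<^sub>M borel)" by measurable
  have C: "{x::'a. x /\<^sub>R norm x \<in> E} \<in> sets borel"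
    using E' by measurable
  define \<mu>1 where "\<mu>1 = density (nu DIM('a)) (\<lambda>_. emeasure (sphere_measure :: 'a measure) E)"
  define \<mu>2 where "\<mu>2 = distr (density (unifB :: 'a measure) (indicator {x. x /\<^sub>R norm x \<in> E})) borel norm"
  have e1: "emeasure \<mu>1 X = emeasure (nu DIM('a)) X * emeasure (sphere_measure :: 'a measure) E"
    if "X \<in> sets borel" for X
  proof -
    have "emeasure \<mu>1 X = (\<integral>\<^sup>+x. emeasure (sphere_measure :: 'a measure) E * indicator X x \<partial>nu DIM('a))"
      using that unfolding \<mu>1_def by (subst emeasure_density) (auto simp: mult.commute)
    also have "\<dots> = emeasure (sphere_measure :: 'a measure) E * emeasure (nu DIM('a)) X"
      using that by (subst nn_integral_cmult_indicator) auto
    finally show ?thesis by (simp add: mult.commute)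
  qed
  have e2: "emeasure \<mu>2 X = emeasure (unifB :: 'a measure) ({x. norm x \<in> X} \<inter> {x. x /\<^sub>R norm x \<in> E})"
    if X: "X \<in> sets borel" for X
  proof -
    have nX: "{x::'a. norm x \<in> X} \<in> sets borel" using X by measurable
    have "emeasure \<mu>2 X = emeasure (density (unifB :: 'a measure) (indicator {x. x /\<^sub>R norm x \<in> E})) (norm -` X)"
      unfolding \<mu>2_def using X by (subst emeasure_distr) auto
    also have "\<dots> = (\<integral>\<^sup>+x. indicator {x. x /\<^sub>R norm x \<in> E} x * indicator (norm -` X) x \<partial>(unifB :: 'a measure))"
      using nX C by (subst emeasure_density) (auto simp: vimage_def)
    also have "\<dots> = (\<integral>\<^sup>+x. indicator ({x. norm x \<in> X} \<inter> {x. x /\<^sub>R norm x \<in> E}) x \<partial>(unifB :: 'a measure))"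
      by (intro nn_integral_cong) (auto simp: indicator_def)
    also have "\<dots> = emeasure (unifB :: 'a measure) ({x. norm x \<in> X} \<inter> {x. x /\<^sub>R norm x \<in> E})"
      using nX C by (subst nn_integral_indicator) auto
    finally show ?thesis .
  qed
  have "\<mu>1 = \<mu>2"
  proof (rule measure_eqI_lessThan')
    show "sets \<mu>1 = sets borel" "sets \<mu>2 = sets borel" by (auto simp: \<mu>1_def \<mu>2_def)
    show "emeasure \<mu>1 {..<x} < \<infinity>" for x
      by (subst e1) (use N.emeasure_finite[of "{..<x}"] S.emeasure_finite[of E] in \<open>auto simp: ennreal_mult_eq_top_iff less_top[symmetric]\<close>)
    show "emeasure \<mu>1 {..<x} = emeasure \<mu>2 {..<x}" for x
    proof -
      have "{y::'a. norm y \<in> {..<x}} = {y. norm y < x}" by auto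
      then show ?thesis
        using cone_meas[OF E', of x] emeasure_nu_lessThan[OF d, of x] emeasure_sphere_cone[OF E']
        by (simp add: e1 e2)
    qed
  qed
  then have "emeasure (nu DIM('a)) A * emeasure (sphere_measure :: 'a measure) E
      = emeasure (unifB :: 'a measure) ({x. norm x \<in> A} \<inter> {x. x /\<^sub>R norm x \<in> E})"
    using e1[OF A'] e2[OF A'] by simp
  also have "\<dots> = emeasure (distr (unifB :: 'a measure) (borel \<Otimes>\<^sub>M borel) (\<lambda>x. (norm x, x /\<^sub>R norm x))) (A \<times> E)"
  proof -
    have "{x. norm x \<in> A} \<inter> {x::'a. x /\<^sub>R norm x \<in> E} = (\<lambda>x. (norm x, x /\<^sub>R norm x)) -` (A \<times> E) \<inter> space (unifB :: 'a measure)"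
      by auto
    moreover have "A \<times> E \<in> sets (borel \<Otimes>\<^sub>M borel)" using A' E' by auto
    moreover have mT': "(\<lambda>x::'a. (norm x, x /\<^sub>R norm x)) \<in> measurable (unifB :: 'a measure) (borel \<Otimes>\<^sub>M borel)"
      using mT measurable_cong_sets[of "unifB :: 'a measure" borel "borel \<Otimes>\<^sub>M borel" "borel \<Otimes>\<^sub>M borel"] by simp
    ultimately show ?thesis using emeasure_distr[OF mT', of "A \<times> E"]
      by simp
  qed
  finally show "emeasure (nu DIM('a)) A * emeasure (sphere_measure :: 'a measure) E
      = emeasure (distr (unifB :: 'a measure) (borel \<Otimes>\<^sub>M borel) (\<lambda>x. (norm x, x /\<^sub>R norm x))) (A \<times> E)" .
qed


lemma V_pos: "0 < measure lborel (ball (0::'a::euclidean_space) 1)"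
  using content_ball_pos[of "1::real" "0::'a"] by simp

lemma emeasure_ball_V: "emeasure lborel (ball (0::'a::euclidean_space) 1) = ennreal (measure lborel (ball (0::'a) 1))"
  using emeasure_lborel_ball_finite[of "0::'a" 1] by (simp add: emeasure_eq_ennreal_measure)

lemma unifB_density:
  "(unifB :: 'a::euclidean_space measure) = density lborel (\<lambda>x. ennreal (indicator (ball (0::'a) 1) x / measure lborel (ball (0::'a) 1)))"
  unfolding uniform_measure_def
proof (rule density_cong)
  have [measurable]: "ball (0::'a) 1 \<in> sets borel" by simp
  show "(\<lambda>x. indicator (ball (0::'a) 1) x / emeasure lborel (ball (0::'a) 1)) \<in> borel_measurable lborel"
    by measurable
  show "(\<lambda>x. ennreal (indicator (ball (0::'a) 1) x / measure lborel (ball (0::'a) 1))) \<in> borel_measurable lborel"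
    by measurable
  show "AE x in lborel. indicator (ball (0::'a) 1) x / emeasure lborel (ball (0::'a) 1) =
      ennreal (indicator (ball (0::'a) 1) x / measure lborel (ball (0::'a) 1))"
  proof -
    have "1 / ennreal (measure lborel (ball (0::'a) 1)) = ennreal (1 / measure lborel (ball (0::'a) 1))"
      using V_pos[where 'a='a] divide_ennreal[of 1 "measure lborel (ball (0::'a) 1)"] by simp
    then show ?thesis by (auto simp: emeasure_ball_V indicator_def)
  qed
qed

lemma integral_unifB:
  fixes F :: "'a::euclidean_space \<Rightarrow> real"
  assumes F: "F \<in> borel_measurable borel" and supp: "\<And>x. x \<notin> ball 0 1 \<Longrightarrow> F x = 0"
  shows "integral\<^sup>L lborel F = measure lborel (ball (0::'a) 1) * integral\<^sup>L (unifB :: 'a measure) F"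
proof -
  let ?V = "measure lborel (ball (0::'a) 1)"
  have "integral\<^sup>L (unifB :: 'a measure) F = integral\<^sup>L lborel (\<lambda>x. (indicator (ball (0::'a) 1) x / ?V) *\<^sub>R F x)"
  proof -
    have "(\<lambda>x. indicator (ball (0::'a) 1) x / ?V) \<in> borel_measurable borel"
      by (intro borel_measurable_divide borel_measurable_indicator) auto
    then show ?thesis unfolding unifB_density using F V_pos[where 'a='a]
      by (subst integral_density) (auto simp: indicator_def)
  qed
  also have "\<dots> = integral\<^sup>L lborel (\<lambda>x. F x / ?V)"
    by (intro Bochner_Integration.integral_cong) (auto simp: indicator_def supp)
  also have "\<dots> = integral\<^sup>L lborel F / ?V" by simp
  finally show ?thesis using V_pos[where 'a='a] by simp
qed

lemma polar_integral:
  fixes F :: "'a::euclidean_space \<Rightarrow> real"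
  assumes F[measurable]: "F \<in> borel_measurable borel" and bnd: "\<And>x. \<bar>F x\<bar> \<le> C"
  shows "integral\<^sup>L (unifB :: 'a measure) F = (\<integral>s. (\<integral>\<zeta>. F (s *\<^sub>R \<zeta>) \<partial>sphere_measure) \<partial>nu DIM('a))"
proof -
  have d: "DIM('a) \<ge> 1" using DIM_positive[where 'a='a] by linarith
  interpret N: finite_measure "nu DIM('a)" using finite_measure_nu[OF d] .
  interpret S: finite_measure "sphere_measure :: 'a measure" by (rule finite_measure_sphere)
  interpret NS: pair_sigma_finite "nu DIM('a)" "sphere_measure :: 'a measure" ..
  interpret NSf: finite_measure "nu DIM('a) \<Otimes>\<^sub>M (sphere_measure :: 'a measure)"
    by (rule finite_measure_pair_measure) (rule finite_measure_sphere, rule finite_measure_nu[OF d])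
  have mT: "(\<lambda>x::'a. (norm x, x /\<^sub>R norm x)) \<in> measurable (unifB :: 'a measure) (borel \<Otimes>\<^sub>M borel)"
    using measurable_cong_sets[of "unifB :: 'a measure" borel "borel \<Otimes>\<^sub>M borel" "borel \<Otimes>\<^sub>M borel"] by simp
  have mG: "(\<lambda>z::real \<times> 'a. F (fst z *\<^sub>R snd z)) \<in> borel_measurable (borel \<Otimes>\<^sub>M borel)" by measurable
  have "integral\<^sup>L (unifB :: 'a measure) F = integral\<^sup>L (unifB :: 'a measure) (\<lambda>x. F (norm x *\<^sub>R (x /\<^sub>R norm x)))"
  proof -
    have "norm x *\<^sub>R (x /\<^sub>R norm x) = x" for x :: 'a by (cases "x = 0") auto
    then show ?thesis by simp
  qed
  also have "\<dots> = integral\<^sup>L (distr (unifB :: 'a measure) (borel \<Otimes>\<^sub>M borel) (\<lambda>x. (norm x, x /\<^sub>R norm x)))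
       (\<lambda>z. F (fst z *\<^sub>R snd z))"
    using integral_distr[OF mT mG] by simp
  also have "\<dots> = integral\<^sup>L (nu DIM('a) \<Otimes>\<^sub>M (sphere_measure :: 'a measure)) (\<lambda>z. F (fst z *\<^sub>R snd z))"
    by (simp add: polar_pair)
  also have "\<dots> = (\<integral>s. (\<integral>\<zeta>. F (s *\<^sub>R \<zeta>) \<partial>sphere_measure) \<partial>nu DIM('a))"
  proof -
    have "integrable (nu DIM('a) \<Otimes>\<^sub>M (sphere_measure :: 'a measure)) (\<lambda>z. F (fst z *\<^sub>R snd z))"
      by (rule NSf.integrable_const_bound[where B=C]) (use bnd in auto)
    from NS.integral_fst'[OF this] show ?thesis by simp
  qed
  finally show ?thesis .
qed

lemma integral_nu:
  fixes g :: "real \<Rightarrow> real"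
  assumes [measurable]: "g \<in> borel_measurable borel"
  shows "integral\<^sup>L (nu d) g = integral\<^sup>L lborel (\<lambda>s. indicator {0..1} s * (real d * s ^ (d - 1)) * g s)"
  unfolding nu_def by (subst integral_density) (auto simp: indicator_def)


definition sstep :: "real \<Rightarrow> real" where
  "sstep x = (if x \<le> 0 then 0 else if x \<ge> 1 then 1 else 3 * x^2 - 2 * x^3)"
definition sstep' :: "real \<Rightarrow> real" where
  "sstep' x = (if x \<le> 0 then 0 else if x \<ge> 1 then 0 else 6 * x - 6 * x^2)"

lemma sstep_range: "0 \<le> sstep x" "sstep x \<le> 1"
proof -
  have a: "0 \<le> 3 * x^2 - 2 * x^3" "3 * x^2 - 2 * x^3 \<le> 1" if "0 < x" "x < 1"
  proof -
    have "3 * x^2 - 2 * x^3 = x^2 * (3 - 2 * x)" by (simp add: algebra_simps power2_eq_square power3_eq_cube)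
    moreover have "x^2 * (3 - 2*x) \<ge> 0" using that by simp
    ultimately show "0 \<le> 3 * x^2 - 2 * x^3" by simp
    have "1 - (3 * x^2 - 2 * x^3) = (1 - x)^2 * (1 + 2 * x)"
      by (simp add: algebra_simps power2_eq_square power3_eq_cube)
    moreover have "(1 - x)^2 * (1 + 2 * x) \<ge> 0" using that by simp
    ultimately show "3 * x^2 - 2 * x^3 \<le> 1" by simp
  qed
  show "0 \<le> sstep x" "sstep x \<le> 1" using a by (auto simp: sstep_def)
qed

lemma sstep'_nonneg: "sstep' x \<ge> 0"
proof -
  have "6 * x - 6 * x^2 = 6 * x * (1 - x)" by (simp add: algebra_simps power2_eq_square)
  then show ?thesis by (auto simp: sstep'_def)
qed

lemma sstep'_cont: "continuous_on UNIV sstep'"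
proof -
  have "sstep' = (\<lambda>x. 6 * max 0 (min 1 x) - 6 * (max 0 (min 1 x))^2)"
    by (auto simp: sstep'_def fun_eq_iff max_def min_def)
  moreover have "continuous_on UNIV (\<lambda>x::real. 6 * max 0 (min 1 x) - 6 * (max 0 (min 1 x))^2)"
    by (intro continuous_intros)
  ultimately show ?thesis by metis
qed

lemma sstep_deriv: "(sstep has_real_derivative sstep' x) (at x)"
proof -
  consider "x < 0" | "x = 0" | "0 < x \<and> x < 1" | "x = 1" | "x > 1" by linarith
  then show ?thesis
  proof cases
    case 1
    show ?thesis
      by (rule has_field_derivative_transform_within_open[of "\<lambda>_. 0" _ _ "{..<0}"])
         (use 1 in \<open>auto simp: sstep_def sstep'_def\<close>)
  next
    case 3
    have "((\<lambda>x. 3 * x^2 - 2 * x^3) has_real_derivative 6 * x - 6 * x^2) (at x)"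
      by (rule derivative_eq_intros refl)+ (simp add: power2_eq_square)
    moreover have "sstep' x = 6 * x - 6 * x^2" using 3 by (simp add: sstep'_def)
    ultimately show ?thesis
      by (metis (no_types, lifting) has_field_derivative_transform_within_open[of _ _ _ "{0<..<1}"]
          3 greaterThanLessThan_iff open_greaterThanLessThan sstep_def not_le)
  next
    case 5
    show ?thesis
      by (rule has_field_derivative_transform_within_open[of "\<lambda>_. 1" _ _ "{1<..}"])
         (use 5 in \<open>auto simp: sstep_def sstep'_def\<close>)
  next
    case 2
    have "((\<lambda>h. (sstep (0 + h) - sstep 0) / h) \<longlongrightarrow> 0) (at 0)"
    proof (rule Lim_null_comparison)
      show "\<forall>\<^sub>F h in at 0. norm ((sstep (0 + h) - sstep 0) / h) \<le> 3 * \<bar>h\<bar>"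
      proof (rule eventually_at_leftI[where b=1] | rule eventuallyI)
        fix h :: real
        show "norm ((sstep (0 + h) - sstep 0) / h) \<le> 3 * \<bar>h\<bar>"
        proof (cases "h \<le> 0 \<or> h \<ge> 1")
          case True
          then consider "h \<le> 0" | "h \<ge> 1" by auto
          then show ?thesis
          proof cases
            case 1 then show ?thesis by (auto simp: sstep_def)
          next
            case 2
            then have "1 / h \<le> 1" by simp
            then have "1 / h \<le> 3 * h" using 2 by linarith
            then show ?thesis using 2 by (auto simp: sstep_def)
          qed
        next
          case False
          then have h: "0 < h" "h < 1" by auto
          have "(sstep h - sstep 0) / h = 3 * h - 2 * h^2"
            using h by (simp add: sstep_def field_simps power2_eq_square power3_eq_cube)
          moreover have "\<bar>3 * h - 2 * h^2\<bar> \<le> 3 * \<bar>h\<bar>" using h by (simp add: power2_eq_square)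
          ultimately show ?thesis by simp
        qed
      qed
      show "((\<lambda>h. 3 * \<bar>h\<bar>) \<longlongrightarrow> 0) (at (0::real))"
        by (rule tendsto_eq_intros refl)+ simp
    qed
    then show ?thesis using 2 by (simp add: DERIV_def sstep'_def)
  next
    case 4
    have "((\<lambda>h. (sstep (1 + h) - sstep 1) / h) \<longlongrightarrow> 0) (at 0)"
    proof (rule Lim_null_comparison)
      show "\<forall>\<^sub>F h in at 0. norm ((sstep (1 + h) - sstep 1) / h) \<le> 3 * \<bar>h\<bar>"
      proof (rule eventuallyI)
        fix h :: real
        show "norm ((sstep (1 + h) - sstep 1) / h) \<le> 3 * \<bar>h\<bar>"
        proof (cases "h \<ge> 0 \<or> h \<le> -1")
          case True
          then consider "h \<ge> 0" | "h \<le> -1" by auto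
          then show ?thesis
          proof cases
            case 1 then show ?thesis by (auto simp: sstep_def)
          next
            case 2
            then have "-1 \<le> 1 / h" by (simp add: divide_le_eq le_divide_eq)
            then have "3 * h \<le> 1 / h" using 2 by linarith
            then show ?thesis using 2 by (auto simp: sstep_def)
          qed
        next
          case False
          then have h: "-1 < h" "h < 0" by auto
          have "(sstep (1 + h) - sstep 1) / h = - h * (3 + 2 * h)"
            using h by (simp add: sstep_def field_simps power2_eq_square power3_eq_cube)
          moreover have "\<bar>- h * (3 + 2 * h)\<bar> \<le> 3 * \<bar>h\<bar>"
            using h by (simp add: abs_mult)
          ultimately show ?thesis by simp
        qed
      qed
      show "((\<lambda>h. 3 * \<bar>h\<bar>) \<longlongrightarrow> 0) (at (0::real))"
        by (rule tendsto_eq_intros refl)+ simp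
    qed
    then show ?thesis using 4 by (simp add: DERIV_def sstep'_def)
  qed
qed


definition kf :: "real \<Rightarrow> real \<Rightarrow> real \<Rightarrow> real \<Rightarrow> real" where
  "kf r1 r2 \<delta> s = sstep ((s - r1) / \<delta>) * sstep ((r2 - s) / \<delta>)"
definition kf' :: "real \<Rightarrow> real \<Rightarrow> real \<Rightarrow> real \<Rightarrow> real" where
  "kf' r1 r2 \<delta> s = sstep' ((s - r1) / \<delta>) / \<delta> * sstep ((r2 - s) / \<delta>)
                    - sstep ((s - r1) / \<delta>) * sstep' ((r2 - s) / \<delta>) / \<delta>"

lemma sstep_le0: "x \<le> 0 \<Longrightarrow> sstep x = 0" and sstep'_le0: "x \<le> 0 \<Longrightarrow> sstep' x = 0"
  and sstep_ge1: "x \<ge> 1 \<Longrightarrow> sstep x = 1" and sstep'_ge1: "x \<ge> 1 \<Longrightarrow> sstep' x = 0"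
  by (auto simp: sstep_def sstep'_def)

lemma sstep_cont: "continuous_on UNIV sstep"
  using sstep_deriv by (meson DERIV_isCont continuous_at_imp_continuous_on)

context
  fixes r1 r2 \<delta> :: real
  assumes d: "\<delta> > 0" "2 * \<delta> \<le> r2 - r1"
begin

lemma kf_deriv: "(kf r1 r2 \<delta> has_real_derivative kf' r1 r2 \<delta> s) (at s)"
proof -
  have a1: "((\<lambda>s. (s - r1) / \<delta>) has_real_derivative 1 / \<delta>) (at s)"
  proof -
    have "((\<lambda>s. (s - r1) / \<delta>) has_real_derivative (1 - 0) / \<delta>) (at s)"
      by (intro DERIV_cdivide DERIV_diff DERIV_ident DERIV_const)
    then show ?thesis by simp
  qed
  have b1: "((\<lambda>s. (r2 - s) / \<delta>) has_real_derivative - 1 / \<delta>) (at s)"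
  proof -
    have "((\<lambda>s. (r2 - s) / \<delta>) has_real_derivative (0 - 1) / \<delta>) (at s)"
      by (intro DERIV_cdivide DERIV_diff DERIV_ident DERIV_const)
    then show ?thesis by simp
  qed
  have a: "((\<lambda>s. sstep ((s - r1) / \<delta>)) has_real_derivative sstep' ((s - r1) / \<delta>) * (1 / \<delta>)) (at s)"
    by (rule DERIV_chain2[OF sstep_deriv a1])
  have b: "((\<lambda>s. sstep ((r2 - s) / \<delta>)) has_real_derivative sstep' ((r2 - s) / \<delta>) * (- 1 / \<delta>)) (at s)"
    by (rule DERIV_chain2[OF sstep_deriv b1])
  have "((\<lambda>s. sstep ((s - r1) / \<delta>) * sstep ((r2 - s) / \<delta>)) has_real_derivative
      sstep' ((s - r1) / \<delta>) * (1 / \<delta>) * sstep ((r2 - s) / \<delta>) + sstep' ((r2 - s) / \<delta>) * (- 1 / \<delta>) * sstep ((s - r1) / \<delta>)) (at s)"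
    by (rule DERIV_mult[OF a b])
  then show ?thesis unfolding kf_def[abs_def] kf'_def by (simp add: algebra_simps)
qed

lemma kf'_cont: "continuous_on UNIV (kf' r1 r2 \<delta>)"
proof -
  have "continuous_on UNIV (\<lambda>s. sstep' ((s - r1) / \<delta>))"
    by (rule continuous_on_compose2[OF sstep'_cont]) (use d in \<open>auto intro!: continuous_intros\<close>)
  moreover have "continuous_on UNIV (\<lambda>s. sstep' ((r2 - s) / \<delta>))"
    by (rule continuous_on_compose2[OF sstep'_cont]) (use d in \<open>auto intro!: continuous_intros\<close>)
  moreover have "continuous_on UNIV (\<lambda>s. sstep ((s - r1) / \<delta>))"
    by (rule continuous_on_compose2[OF sstep_cont]) (use d in \<open>auto intro!: continuous_intros\<close>)
  moreover have "continuous_on UNIV (\<lambda>s. sstep ((r2 - s) / \<delta>))"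
    by (rule continuous_on_compose2[OF sstep_cont]) (use d in \<open>auto intro!: continuous_intros\<close>)
  ultimately show ?thesis unfolding kf'_def[abs_def] using d by (intro continuous_intros) auto
qed

lemma kf_low: "s \<le> r1 \<Longrightarrow> kf r1 r2 \<delta> s = 0 \<and> kf' r1 r2 \<delta> s = 0"
proof -
  assume "s \<le> r1"
  then have "(s - r1) / \<delta> \<le> 0" using d by (simp add: divide_le_0_iff)
  then show ?thesis by (simp add: kf_def kf'_def sstep_le0 sstep'_le0)
qed

lemma kf_high: "s \<ge> r2 \<Longrightarrow> kf r1 r2 \<delta> s = 0 \<and> kf' r1 r2 \<delta> s = 0"
proof -
  assume "s \<ge> r2"
  then have "(r2 - s) / \<delta> \<le> 0" using d by (simp add: divide_le_0_iff)
  then show ?thesis by (simp add: kf_def kf'_def sstep_le0 sstep'_le0)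
qed

lemma kf_nonneg: "kf r1 r2 \<delta> s \<ge> 0"
  by (simp add: kf_def sstep_range)

lemma kf_mid: "kf r1 r2 \<delta> ((r1 + r2) / 2) = 1"
proof -
  have e: "(r1 + r2) / 2 - r1 = (r2 - r1) / 2" "r2 - (r1 + r2) / 2 = (r2 - r1) / 2" by (simp_all add: field_simps)
  have "((r1 + r2) / 2 - r1) / \<delta> \<ge> 1" "(r2 - (r1 + r2) / 2) / \<delta> \<ge> 1"
    unfolding e using d by (simp_all add: le_divide_eq)
  then show ?thesis by (simp add: kf_def sstep_ge1)
qed

lemma kf'_left:
  assumes "s \<le> (r1 + r2) / 2"
  shows "kf' r1 r2 \<delta> s \<ge> 0" "s \<le> r1 \<or> s \<ge> r1 + \<delta> \<Longrightarrow> kf' r1 r2 \<delta> s = 0"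
proof -
  have "(r2 - s) / \<delta> \<ge> 1" using d assms by (simp add: le_divide_eq)
  then have e: "kf' r1 r2 \<delta> s = sstep' ((s - r1) / \<delta>) / \<delta>"
    by (simp add: kf'_def sstep_ge1 sstep'_ge1)
  show "kf' r1 r2 \<delta> s \<ge> 0" unfolding e using d sstep'_nonneg by simp
  assume "s \<le> r1 \<or> s \<ge> r1 + \<delta>"
  then have "(s - r1) / \<delta> \<le> 0 \<or> (s - r1) / \<delta> \<ge> 1"
    using d by (auto simp: divide_le_0_iff le_divide_eq)
  then show "kf' r1 r2 \<delta> s = 0" unfolding e by (auto simp: sstep'_le0 sstep'_ge1)
qed

lemma kf'_right:
  assumes "s \<ge> (r1 + r2) / 2"
  shows "kf' r1 r2 \<delta> s \<le> 0" "s \<le> r2 - \<delta> \<or> s \<ge> r2 \<Longrightarrow> kf' r1 r2 \<delta> s = 0"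
proof -
  have "(s - r1) / \<delta> \<ge> 1" using d assms by (simp add: le_divide_eq)
  then have e: "kf' r1 r2 \<delta> s = - sstep' ((r2 - s) / \<delta>) / \<delta>"
    by (simp add: kf'_def sstep_ge1 sstep'_ge1)
  show "kf' r1 r2 \<delta> s \<le> 0" unfolding e using d sstep'_nonneg by simp
  assume "s \<le> r2 - \<delta> \<or> s \<ge> r2"
  then have "(r2 - s) / \<delta> \<le> 0 \<or> (r2 - s) / \<delta> \<ge> 1"
    using d by (auto simp: divide_le_0_iff le_divide_eq)
  then show "kf' r1 r2 \<delta> s = 0" unfolding e by (auto simp: sstep'_le0 sstep'_ge1)
qed

end


locale radk =
  fixes k k' :: "real \<Rightarrow> real" and d :: nat and a b :: real
  assumes kd: "\<And>s. (k has_real_derivative k' s) (at s)"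
    and k'c: "continuous_on UNIV k'"
    and klow: "\<And>s. s \<le> a \<Longrightarrow> k s = 0 \<and> k' s = 0"
    and khigh: "\<And>s. s \<ge> b \<Longrightarrow> k s = 0 \<and> k' s = 0"
    and knn: "\<And>s. k s \<ge> 0"
    and ab: "0 < a" "a < b" "b < 1"
begin

definition \<kappa> :: "real \<Rightarrow> real" where "\<kappa> t = k (sqrt t) / sqrt t ^ d"
definition \<kappa>' :: "real \<Rightarrow> real" where
  "\<kappa>' t = (k' (sqrt t) / sqrt t ^ d - real d * k (sqrt t) / sqrt t ^ (d + 1)) / (2 * sqrt t)"
definition \<Psi> :: "real \<Rightarrow> real" where "\<Psi> t = integral {0..1} \<kappa> - integral {0..t} \<kappa>"

lemma kc: "continuous_on UNIV k"
  using kd by (meson DERIV_isCont continuous_at_imp_continuous_on)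

lemma \<kappa>_zero: "t \<le> a\<^sup>2 \<or> t \<ge> b\<^sup>2 \<Longrightarrow> \<kappa> t = 0 \<and> \<kappa>' t = 0"
proof -
  assume "t \<le> a\<^sup>2 \<or> t \<ge> b\<^sup>2"
  then have "sqrt t \<le> a \<or> sqrt t \<ge> b"
    using ab by (metis real_sqrt_le_mono real_sqrt_abs abs_of_pos less_trans)
  then have "k (sqrt t) = 0 \<and> k' (sqrt t) = 0" using klow khigh by blast
  then show ?thesis by (simp add: \<kappa>_def \<kappa>'_def)
qed

lemma \<kappa>_nonneg: "\<kappa> t \<ge> 0"
proof (cases "t \<le> 0")
  case True then show ?thesis using \<kappa>_zero[of t] ab by (smt (verit) zero_le_power2)
next
  case False then show ?thesis using knn by (simp add: \<kappa>_def)
qed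

lemma \<kappa>_deriv: "(\<kappa> has_real_derivative \<kappa>' t) (at t)"
proof (cases "t > 0")
  case True
  have s: "(sqrt has_real_derivative inverse (sqrt t) / 2) (at t)" by (rule DERIV_real_sqrt[OF True])
  have st: "sqrt t > 0" using True by simp
  have "((\<lambda>t. k (sqrt t) / sqrt t ^ d) has_real_derivative
      ((k' (sqrt t) * (inverse (sqrt t) / 2)) * sqrt t ^ d - k (sqrt t) * (real d * sqrt t ^ (d - 1) * (inverse (sqrt t) / 2))) / (sqrt t ^ d * sqrt t ^ d)) (at t)"
    using st by (intro DERIV_divide DERIV_chain2[OF kd s] DERIV_pow DERIV_chain2[OF _ s]) auto
  moreover have "((k' (sqrt t) * (inverse (sqrt t) / 2)) * sqrt t ^ d - k (sqrt t) * (real d * sqrt t ^ (d - 1) * (inverse (sqrt t) / 2))) / (sqrt t ^ d * sqrt t ^ d)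
      = \<kappa>' t"
    unfolding \<kappa>'_def using st by (cases d) (simp_all add: field_simps)
  ultimately show ?thesis unfolding \<kappa>_def[abs_def] by simp
next
  case False
  then have t: "t < a\<^sup>2" using ab by (smt (verit) zero_less_power2)
  have "((\<lambda>_. 0) has_real_derivative 0) (at t)" by simp
  then have "(\<kappa> has_real_derivative 0) (at t)"
    by (rule has_field_derivative_transform_within_open[of _ _ _ "{..<a\<^sup>2}"]) (use t \<kappa>_zero in auto)
  then show ?thesis using \<kappa>_zero t by simp
qed

lemma \<kappa>_cont: "continuous_on UNIV \<kappa>"
  using \<kappa>_deriv by (meson DERIV_isCont continuous_at_imp_continuous_on)

lemma \<kappa>'_cont: "continuous_on UNIV \<kappa>'"
proof -
  have c1: "continuous_on {0<..} \<kappa>'"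
  proof -
    have "continuous_on {0<..} (\<lambda>t. k' (sqrt t))"
      by (rule continuous_on_compose2[OF k'c]) (auto intro!: continuous_intros)
    moreover have "continuous_on {0<..} (\<lambda>t. k (sqrt t))"
      by (rule continuous_on_compose2[OF kc]) (auto intro!: continuous_intros)
    ultimately show ?thesis unfolding \<kappa>'_def[abs_def]
      by (intro continuous_intros) auto
  qed
  have c2: "continuous_on {..<a\<^sup>2} \<kappa>'"
    by (rule continuous_on_eq[of _ "\<lambda>_. 0"]) (use \<kappa>_zero in auto)
  have "continuous_on ({0<..} \<union> {..<a\<^sup>2}) \<kappa>'"
    by (rule continuous_on_open_Un[OF _ _ c1 c2]) auto
  moreover have "{0<..} \<union> {..<a\<^sup>2} = (UNIV :: real set)"
    using ab by auto (smt (verit) zero_less_power2)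
  ultimately show ?thesis by simp
qed

lemma \<kappa>_int: "\<kappa> integrable_on {x..y}"
  using \<kappa>_cont continuous_on_subset integrable_continuous_real by blast

lemma int_small: "t \<le> a\<^sup>2 \<Longrightarrow> integral {0..t} \<kappa> = 0"
proof -
  assume t: "t \<le> a\<^sup>2"
  have "integral {0..t} \<kappa> = integral {0..t} (\<lambda>_. 0::real)"
    by (rule integral_cong) (use t \<kappa>_zero in auto)
  then show ?thesis by simp
qed

lemma int_large: "t \<ge> b\<^sup>2 \<Longrightarrow> integral {0..t} \<kappa> = integral {0..b\<^sup>2} \<kappa>"
proof -
  assume t: "t \<ge> b\<^sup>2"
  have "integral {0..b\<^sup>2} \<kappa> + integral {b\<^sup>2..t} \<kappa> = integral {0..t} \<kappa>"
    by (rule Henstock_Kurzweil_Integration.integral_combine) (use t \<kappa>_int in auto)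
  moreover have "integral {b\<^sup>2..t} \<kappa> = integral {b\<^sup>2..t} (\<lambda>_. 0::real)"
    by (rule integral_cong) (use \<kappa>_zero in auto)
  ultimately show ?thesis by simp
qed

lemma \<Psi>_deriv: "(\<Psi> has_real_derivative - \<kappa> t) (at t)"
proof (cases "t > 0 \<and> t < 2")
  case True
  have "((\<lambda>x. integral {0..x} \<kappa>) has_real_derivative \<kappa> t) (at t within {0..2})"
    by (rule integral_has_real_derivative) (use True \<kappa>_cont continuous_on_subset in auto)
  moreover have "at t within {0..2} = at t"
    by (rule at_within_interior) (use True in auto)
  ultimately have "((\<lambda>x. integral {0..x} \<kappa>) has_real_derivative \<kappa> t) (at t)" by simp
  then have "((\<lambda>x. integral {0..1} \<kappa> - integral {0..x} \<kappa>) has_real_derivative 0 - \<kappa> t) (at t)"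
    by (intro DERIV_diff DERIV_const)
  then show ?thesis unfolding \<Psi>_def[abs_def] by simp
next
  case False
  have a2: "a\<^sup>2 > 0" using ab by simp
  have b2: "b\<^sup>2 < 1" using ab by (simp add: power_less_one_iff abs_less_iff)
  have "t \<le> 0 \<or> t \<ge> 2" using False by auto
  moreover have "t < a\<^sup>2" if "t \<le> 0" using that a2 by linarith
  moreover have "t > b\<^sup>2" if "t \<ge> 2" using that b2 by linarith
  ultimately have "t < a\<^sup>2 \<or> t > b\<^sup>2" by blast
  then show ?thesis
  proof
    assume t: "t < a\<^sup>2"
    have "((\<lambda>_. integral {0..1} \<kappa>) has_real_derivative 0) (at t)" by simp
    then have "(\<Psi> has_real_derivative 0) (at t)"
      by (rule has_field_derivative_transform_within_open[of _ _ _ "{..<a\<^sup>2}"])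
         (use t int_small in \<open>auto simp: \<Psi>_def\<close>)
    then show ?thesis using \<kappa>_zero t by simp
  next
    assume t: "t > b\<^sup>2"
    have z: "\<Psi> x = 0" if "x > b\<^sup>2" for x
      using int_large[of 1] int_large[of x] that b2 unfolding \<Psi>_def by simp
    have "((\<lambda>_. 0) has_real_derivative 0) (at t)" by simp
    then have "(\<Psi> has_real_derivative 0) (at t)"
      by (rule has_field_derivative_transform_within_open[of _ _ _ "{b\<^sup>2<..}"])
         (use t z in auto)
    then show ?thesis using \<kappa>_zero t by simp
  qed
qed

lemma \<Psi>_zero: "t \<ge> b\<^sup>2 \<Longrightarrow> \<Psi> t = 0"
proof -
  assume t: "t \<ge> b\<^sup>2"
  have b2: "b\<^sup>2 < 1" using ab by (simp add: power_less_one_iff abs_less_iff)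
  show ?thesis using int_large[of 1] int_large[of t] t b2 unfolding \<Psi>_def by simp
qed

lemma \<Psi>_nonneg: "\<Psi> t \<ge> 0"
proof -
  have a2: "a\<^sup>2 > 0" using ab by simp
  consider "t < 0" | "0 \<le> t \<and> t \<le> 1" | "t > 1" by linarith
  then show ?thesis
  proof cases
    case 1
    then have "integral {0..t} \<kappa> = 0" using int_small[of t] a2 by simp
    moreover have "integral {0..1} \<kappa> \<ge> 0" by (rule integral_nonneg) (use \<kappa>_int \<kappa>_nonneg in auto)
    ultimately show ?thesis by (simp add: \<Psi>_def)
  next
    case 2
    have "integral {0..t} \<kappa> + integral {t..1} \<kappa> = integral {0..1} \<kappa>"
      by (rule Henstock_Kurzweil_Integration.integral_combine) (use 2 \<kappa>_int in auto)
    moreover have "integral {t..1} \<kappa> \<ge> 0" by (rule integral_nonneg) (use \<kappa>_int \<kappa>_nonneg in auto)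
    ultimately show ?thesis by (simp add: \<Psi>_def)
  next
    case 3
    have b2: "b\<^sup>2 < 1" using ab by (simp add: power_less_one_iff abs_less_iff)
    then show ?thesis using \<Psi>_zero[of t] 3 by simp
  qed
qed

lemma \<Psi>_cont: "continuous_on UNIV \<Psi>"
  using \<Psi>_deriv by (meson DERIV_isCont continuous_at_imp_continuous_on)

lemma lap_identity:
  fixes x :: "'a::euclidean_space"
  shows "- 2 * real d * \<kappa> (x \<bullet> x) - 4 * (x \<bullet> x) * \<kappa>' (x \<bullet> x) = - 2 * norm x * k' (norm x) / norm x ^ d"
proof (cases "x = 0")
  case True
  then show ?thesis using \<kappa>_zero[of 0] ab by simp
next
  case False
  then have n: "norm x > 0" by simp
  have q: "x \<bullet> x = (norm x)\<^sup>2" by (simp add: power2_norm_eq_inner)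
  have sq: "sqrt (x \<bullet> x) = norm x" by (simp add: q)
  show ?thesis unfolding \<kappa>_def \<kappa>'_def sq unfolding q using n
    by (simp add: field_simps power2_eq_square)
qed


end


lemma inner_line: "(x + t *\<^sub>R b) \<bullet> (x + t *\<^sub>R b) = x \<bullet> x + 2 * t * (x \<bullet> b) + t\<^sup>2 * (b \<bullet> b)"
  by (simp add: inner_add_left inner_add_right inner_commute algebra_simps power2_eq_square)

lemma q_deriv: "((\<lambda>t. (x + t *\<^sub>R b) \<bullet> (x + t *\<^sub>R b)) has_real_derivative 2 * (x \<bullet> b)) (at 0)"
proof -
  have "((\<lambda>t. x \<bullet> x + 2 * t * (x \<bullet> b) + t\<^sup>2 * (b \<bullet> b)) has_real_derivative 2 * (x \<bullet> b)) (at 0)"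
    by (rule derivative_eq_intros refl)+ simp
  then show ?thesis by (simp add: inner_line)
qed

lemma l_deriv: "((\<lambda>t. (x + t *\<^sub>R b) \<bullet> b) has_real_derivative b \<bullet> b) (at 0)"
proof -
  have "((\<lambda>t. x \<bullet> b + t * (b \<bullet> b)) has_real_derivative b \<bullet> b) (at 0)"
    by (rule derivative_eq_intros refl)+ simp
  then show ?thesis by (simp add: inner_add_left)
qed

context radk begin

lemma phi_d1: "((\<lambda>t. \<Psi> ((x + t *\<^sub>R v) \<bullet> (x + t *\<^sub>R v))) has_real_derivative (- \<kappa> (x \<bullet> x)) * (2 * (x \<bullet> v))) (at 0)"
  using DERIV_chain2[OF \<Psi>_deriv q_deriv[of x v]] by simp

lemma phi_d2: "((\<lambda>t. 2 * ((x + t *\<^sub>R v) \<bullet> v) * (- \<kappa> ((x + t *\<^sub>R v) \<bullet> (x + t *\<^sub>R v)))) has_real_derivative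
   2 * (v \<bullet> v) * (- \<kappa> (x \<bullet> x)) + 2 * (x \<bullet> v) * (- \<kappa>' (x \<bullet> x) * (2 * (x \<bullet> v)))) (at 0)"
proof -
  have k: "((\<lambda>t. \<kappa> ((x + t *\<^sub>R v) \<bullet> (x + t *\<^sub>R v))) has_real_derivative \<kappa>' (x \<bullet> x) * (2 * (x \<bullet> v))) (at 0)"
    using DERIV_chain2[OF \<kappa>_deriv q_deriv[of x v]] by simp
  have "((\<lambda>t. 2 * ((x + t *\<^sub>R v) \<bullet> v) * (- \<kappa> ((x + t *\<^sub>R v) \<bullet> (x + t *\<^sub>R v)))) has_real_derivative
     (0 * ((x + 0 *\<^sub>R v) \<bullet> v) + (v \<bullet> v) * 2) * (- \<kappa> ((x + 0 *\<^sub>R v) \<bullet> (x + 0 *\<^sub>R v)))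
       + (- (\<kappa>' (x \<bullet> x) * (2 * (x \<bullet> v)))) * (2 * ((x + 0 *\<^sub>R v) \<bullet> v))) (at 0)"
    by (intro DERIV_mult DERIV_const l_deriv DERIV_minus k)
  then show ?thesis by (simp add: algebra_simps)
qed

lemma phi_cont: "continuous_on UNIV (\<lambda>x::'a::euclidean_space. \<Psi> (x \<bullet> x))"
  by (rule continuous_on_compose2[OF \<Psi>_cont]) (auto intro!: continuous_intros)

lemma phi1_cont: "continuous_on UNIV (\<lambda>x::'a::euclidean_space. 2 * (x \<bullet> v) * (- \<kappa> (x \<bullet> x)))"
proof -
  have "continuous_on UNIV (\<lambda>x::'a. \<kappa> (x \<bullet> x))"
    by (rule continuous_on_compose2[OF \<kappa>_cont]) (auto intro!: continuous_intros)
  then show ?thesis by (intro continuous_intros)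
qed

lemma phi2_cont: "continuous_on UNIV (\<lambda>x::'a::euclidean_space. 2 * (v \<bullet> v) * (- \<kappa> (x \<bullet> x)) + 2 * (x \<bullet> v) * (- \<kappa>' (x \<bullet> x) * (2 * (x \<bullet> v))))"
proof -
  have "continuous_on UNIV (\<lambda>x::'a. \<kappa> (x \<bullet> x))"
    by (rule continuous_on_compose2[OF \<kappa>_cont]) (auto intro!: continuous_intros)
  moreover have "continuous_on UNIV (\<lambda>x::'a. \<kappa>' (x \<bullet> x))"
    by (rule continuous_on_compose2[OF \<kappa>'_cont]) (auto intro!: continuous_intros)
  ultimately show ?thesis by (intro continuous_intros)
qed

lemma phi_supp:
  fixes x :: "'a::euclidean_space"
  assumes "x \<notin> cball 0 b"
  shows "\<Psi> (x \<bullet> x) = 0 \<and> \<kappa> (x \<bullet> x) = 0 \<and> \<kappa>' (x \<bullet> x) = 0"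
proof -
  have "norm x > b" using assms by simp
  then have "(norm x)\<^sup>2 \<ge> b\<^sup>2" using ab by (simp add: power_mono)
  then have "x \<bullet> x \<ge> b\<^sup>2" by (simp add: power2_norm_eq_inner)
  then show ?thesis using \<Psi>_zero \<kappa>_zero by blast
qed

lemma sum_phi2:
  fixes x :: "'a::euclidean_space"
  assumes "d = DIM('a)"
  shows "(\<Sum>v\<in>Basis. 2 * (v \<bullet> v) * (- \<kappa> (x \<bullet> x)) + 2 * (x \<bullet> v) * (- \<kappa>' (x \<bullet> x) * (2 * (x \<bullet> v))))
       = - 2 * norm x * k' (norm x) / norm x ^ d"
proof -
  have "(\<Sum>v\<in>Basis. 2 * (v \<bullet> v) * (- \<kappa> (x \<bullet> x)) + 2 * (x \<bullet> v) * (- \<kappa>' (x \<bullet> x) * (2 * (x \<bullet> v))))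
      = (\<Sum>v\<in>(Basis::'a set). - 2 * \<kappa> (x \<bullet> x) - 4 * \<kappa>' (x \<bullet> x) * ((x \<bullet> v) * (x \<bullet> v)))"
    by (intro sum.cong) (auto simp: algebra_simps)
  also have "\<dots> = - 2 * real d * \<kappa> (x \<bullet> x) - 4 * \<kappa>' (x \<bullet> x) * (\<Sum>v\<in>(Basis::'a set). (x \<bullet> v) * (x \<bullet> v))"
    using assms by (simp add: sum_subtractf sum_distrib_left)
  also have "(\<Sum>v\<in>(Basis::'a set). (x \<bullet> v) * (x \<bullet> v)) = x \<bullet> x"
    by (simp add: euclidean_inner[of x x])
  finally show ?thesis using lap_identity[of x] by (simp add: algebra_simps)
qed

end


lemma AE_sphere: "AE \<zeta> in (sphere_measure :: 'a::euclidean_space measure). norm \<zeta> = 1"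
proof -
  have [measurable]: "ball (0::'a) 1 \<in> sets borel" by simp
  have "AE x in lborel. (x::'a) \<noteq> 0" by (rule AE_lborel_singleton)
  then have "AE x in (unifB :: 'a measure). x \<noteq> 0"
    unfolding unifB_density by (subst AE_density) (auto elim: AE_mp)
  then have "AE x in (unifB :: 'a measure). norm (x /\<^sub>R norm x) = 1"
    by (rule AE_mp) auto
  then show ?thesis unfolding sphere_measure_def
    by (subst AE_distr_iff) auto
qed

lemma bounded_on_compact:
  fixes F :: "'a::euclidean_space \<Rightarrow> real"
  assumes "compact K" "continuous_on K F" "\<And>x. x \<notin> K \<Longrightarrow> F x = 0"
  obtains C where "\<And>x. \<bar>F x\<bar> \<le> C"
proof -
  have "bounded (F ` K)" using assms compact_continuous_image compact_imp_bounded by blast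
  then obtain C where C: "\<And>y. y \<in> F ` K \<Longrightarrow> norm y \<le> C" by (auto simp: bounded_iff)
  have "\<bar>F x\<bar> \<le> max C 0" for x
    using C[of "F x"] assms(3)[of x] by (cases "x \<in> K") auto
  then show ?thesis using that by blast
qed

context radk begin

lemma key_ineq:
  fixes u :: "'a::euclidean_space \<Rightarrow> real" and u1 u2 :: "'a \<Rightarrow> 'a \<Rightarrow> real"
  assumes dd: "d = DIM('a)"
    and uc: "continuous_on (ball 0 1) u" "\<And>v. v \<in> Basis \<Longrightarrow> continuous_on (ball 0 1) (u1 v)"
      "\<And>v. v \<in> Basis \<Longrightarrow> continuous_on (ball 0 1) (u2 v)"
    and ud1: "\<And>v x. v \<in> Basis \<Longrightarrow> x \<in> ball 0 1 \<Longrightarrow> ((\<lambda>t. u (x + t *\<^sub>R v)) has_real_derivative u1 v x) (at 0)"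
    and ud2: "\<And>v x. v \<in> Basis \<Longrightarrow> x \<in> ball 0 1 \<Longrightarrow> ((\<lambda>t. u1 v (x + t *\<^sub>R v)) has_real_derivative u2 v x) (at 0)"
    and lap: "\<And>x. x \<in> ball 0 1 \<Longrightarrow> (\<Sum>v\<in>Basis. u2 v x) \<ge> 0"
  shows "integral\<^sup>L lborel (\<lambda>s. indicator {0..1} s * k' s *
            (\<integral>\<zeta>. indicator (ball 0 1) (s *\<^sub>R \<zeta>) * u (s *\<^sub>R \<zeta>) \<partial>(sphere_measure :: 'a measure))) \<le> 0"
proof -
  define \<phi> where "\<phi> x = \<Psi> (x \<bullet> x)" for x :: 'a
  define \<phi>1 where "\<phi>1 v x = 2 * (x \<bullet> v) * (- \<kappa> (x \<bullet> x))" for v x :: 'a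
  define \<phi>2 where "\<phi>2 v x = 2 * (v \<bullet> v) * (- \<kappa> (x \<bullet> x)) + 2 * (x \<bullet> v) * (- \<kappa>' (x \<bullet> x) * (2 * (x \<bullet> v)))" for v x :: 'a
  define ut where "ut x = indicator (ball 0 1) x * u x" for x :: 'a
  define G where "G x = - 2 * norm x * k' (norm x) / norm x ^ d" for x :: 'a
  define F where "F x = ut x * G x" for x
  have K: "compact (cball (0::'a) b)" "cball (0::'a) b \<subseteq> ball 0 1" using ab by auto
  have sumphi2: "(\<Sum>v\<in>Basis. \<phi>2 v x) = G x" for x
    unfolding \<phi>2_def G_def using sum_phi2[OF dd] by simp
  have green_eq: "integral\<^sup>L lborel (\<lambda>x. u x * (\<Sum>v\<in>Basis. \<phi>2 v x))
      = integral\<^sup>L lborel (\<lambda>x. \<phi> x * (\<Sum>v\<in>Basis. u2 v x))"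
  proof (rule green[OF _ K uc ud1 ud2])
    show "continuous_on UNIV \<phi>" unfolding \<phi>_def using phi_cont .
    show "continuous_on UNIV (\<phi>1 v)" for v unfolding \<phi>1_def[abs_def] using phi1_cont .
    show "continuous_on UNIV (\<phi>2 v)" for v unfolding \<phi>2_def[abs_def] using phi2_cont .
    show "((\<lambda>t. \<phi> (x + t *\<^sub>R v)) has_real_derivative \<phi>1 v x) (at 0)" for v x
      unfolding \<phi>_def \<phi>1_def using phi_d1 by (simp add: mult.commute)
    show "((\<lambda>t. \<phi>1 v (x + t *\<^sub>R v)) has_real_derivative \<phi>2 v x) (at 0)" for v x
      unfolding \<phi>1_def \<phi>2_def using phi_d2 by simp
    show "\<phi> x = 0 \<and> \<phi>1 v x = 0 \<and> \<phi>2 v x = 0" if "x \<notin> cball 0 b" for v x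
      using phi_supp[OF that] by (simp add: \<phi>_def \<phi>1_def \<phi>2_def)
  qed auto
  have rhs_nonneg: "integral\<^sup>L lborel (\<lambda>x. \<phi> x * (\<Sum>v\<in>Basis. u2 v x)) \<ge> 0"
  proof (rule Bochner_Integration.integral_nonneg)
    fix x :: 'a
    assume "x \<in> space lborel"
    show "0 \<le> \<phi> x * (\<Sum>v\<in>Basis. u2 v x)"
    proof (cases "x \<in> cball 0 b")
      case True then show ?thesis using lap K(2) \<Psi>_nonneg by (auto simp: \<phi>_def)
    next
      case False then show ?thesis using phi_supp[OF False] by (simp add: \<phi>_def)
    qed
  qed
  have FG: "u x * (\<Sum>v\<in>Basis. \<phi>2 v x) = F x" for x
  proof (cases "x \<in> cball 0 b")
    case True then show ?thesis using K(2) by (auto simp: F_def ut_def sumphi2)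
  next
    case False
    then have "norm x \<ge> b" by simp
    then have "G x = 0" using khigh by (simp add: G_def)
    then show ?thesis by (simp add: F_def sumphi2)
  qed
  have Fnn: "integral\<^sup>L lborel F \<ge> 0" using green_eq rhs_nonneg FG by simp
  have dpos: "d \<ge> 1" using dd DIM_positive[where 'a='a] by linarith
  have [measurable]: "k' \<in> borel_measurable borel" using k'c by (rule borel_measurable_continuous_onI)
  have [measurable]: "ut \<in> borel_measurable borel"
    using borel_measurable_continuous_on_indicator[of "ball (0::'a) 1" u] uc(1) by (simp add: ut_def[abs_def])
  have [measurable]: "G \<in> borel_measurable borel" unfolding G_def[abs_def] by measurable
  have Fm[measurable]: "F \<in> borel_measurable borel" unfolding F_def[abs_def] by measurable
  have Fsupp: "F x = 0" if "x \<notin> ball 0 1" for x using that by (simp add: F_def ut_def)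
  obtain C where C: "\<And>x. \<bar>F x\<bar> \<le> C"
  proof (rule bounded_on_compact[OF K(1)])
    have c1: "continuous_on (cball 0 b) (\<lambda>x::'a. \<kappa> (x \<bullet> x))"
      by (rule continuous_on_compose2[OF \<kappa>_cont]) (auto intro!: continuous_intros)
    have c2: "continuous_on (cball 0 b) (\<lambda>x::'a. \<kappa>' (x \<bullet> x))"
      by (rule continuous_on_compose2[OF \<kappa>'_cont]) (auto intro!: continuous_intros)
    have "continuous_on (cball 0 b) (\<lambda>x. u x * (\<Sum>v\<in>Basis. \<phi>2 v x))"
      using continuous_on_subset[OF uc(1) K(2)] c1 c2
      unfolding \<phi>2_def[abs_def] by (intro continuous_intros) auto
    then show "continuous_on (cball 0 b) F" using FG by simp
    show "F x = 0" if "x \<notin> cball 0 b" for x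
    proof -
      have "norm x \<ge> b" using that by simp
      then have "G x = 0" using khigh by (simp add: G_def)
      then show ?thesis by (simp add: F_def)
    qed
  qed blast
  interpret S: finite_measure "sphere_measure :: 'a measure" by (rule finite_measure_sphere)
  define M where "M s = (\<integral>\<zeta>. ut (s *\<^sub>R \<zeta>) \<partial>(sphere_measure :: 'a measure))" for s
  have inner: "(\<integral>\<zeta>. F (s *\<^sub>R \<zeta>) \<partial>(sphere_measure :: 'a measure)) = (- 2 * \<bar>s\<bar> * k' \<bar>s\<bar> / \<bar>s\<bar> ^ d) * M s" for s
  proof -
    have "(\<integral>\<zeta>. F (s *\<^sub>R \<zeta>) \<partial>(sphere_measure :: 'a measure))
        = (\<integral>\<zeta>. (- 2 * \<bar>s\<bar> * k' \<bar>s\<bar> / \<bar>s\<bar> ^ d) * ut (s *\<^sub>R \<zeta>) \<partial>(sphere_measure :: 'a measure))"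
    proof (rule integral_cong_AE)
      show "AE \<zeta> in sphere_measure. F (s *\<^sub>R \<zeta>) = (- 2 * \<bar>s\<bar> * k' \<bar>s\<bar> / \<bar>s\<bar> ^ d) * ut (s *\<^sub>R \<zeta>)"
        using AE_sphere by (rule AE_mp) (auto simp: F_def G_def)
    qed auto
    then show ?thesis by (simp add: M_def)
  qed
  have "integral\<^sup>L lborel F = measure lborel (ball (0::'a) 1) * integral\<^sup>L (unifB :: 'a measure) F"
    by (rule integral_unifB[OF Fm Fsupp])
  also have "integral\<^sup>L (unifB :: 'a measure) F = (\<integral>s. (\<integral>\<zeta>. F (s *\<^sub>R \<zeta>) \<partial>sphere_measure) \<partial>nu DIM('a))"
    by (rule polar_integral[OF Fm C])
  also have "\<dots> = integral\<^sup>L lborel (\<lambda>s. indicator {0..1} s * (real DIM('a) * s ^ (DIM('a) - 1))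
        * (\<integral>\<zeta>. F (s *\<^sub>R \<zeta>) \<partial>(sphere_measure :: 'a measure)))"
    by (rule integral_nu) measurable
  also have "\<dots> = integral\<^sup>L lborel (\<lambda>s. (- 2 * real d) * (indicator {0..1} s * k' s * M s))"
  proof (rule Bochner_Integration.integral_cong[OF refl])
    fix s :: real
    show "indicator {0..1} s * (real DIM('a) * s ^ (DIM('a) - 1)) * (\<integral>\<zeta>. F (s *\<^sub>R \<zeta>) \<partial>(sphere_measure :: 'a measure))
        = (- 2 * real d) * (indicator {0..1} s * k' s * M s)"
    proof (cases "0 < s \<and> s \<le> 1")
      case True
      have "s ^ (d - 1) * s = s ^ d" using dpos by (metis power_minus_mult less_le_trans zero_less_one le_neq_implies_less not_one_le_zero)
      then show ?thesis using True unfolding inner dd[symmetric] by (simp add: field_simps)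
    next
      case False
      then consider "s \<le> 0" | "s > 1" by linarith
      then show ?thesis
      proof cases
        case 1
        then have "k' s = 0" using klow ab by auto
        then show ?thesis using 1 unfolding inner by (auto simp: indicator_def)
      next
        case 2 then show ?thesis by (simp add: indicator_def)
      qed
    qed
  qed
  also have "\<dots> = (- 2 * real d) * integral\<^sup>L lborel (\<lambda>s. indicator {0..1} s * k' s * M s)" by simp
  finally have "0 \<le> measure lborel (ball (0::'a) 1) * ((- 2 * real d) * integral\<^sup>L lborel (\<lambda>s. indicator {0..1} s * k' s * M s))"
    using Fnn by simp
  then have le: "(real d * measure lborel (ball (0::'a) 1)) * integral\<^sup>L lborel (\<lambda>s. indicator {0..1} s * k' s * M s) \<le> 0"
    by (simp add: algebra_simps)
  have pos: "0 < real d * measure lborel (ball (0::'a) 1)" using V_pos[where 'a='a] dpos by simp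
  have "integral\<^sup>L lborel (\<lambda>s. indicator {0..1} s * k' s * M s) \<le> 0"
    using le pos by (meson mult_le_0_iff not_le)
  then show ?thesis by (simp add: M_def ut_def)
qed

end


lemma measure_sphere_UNIV: "measure (sphere_measure :: 'a::euclidean_space measure) UNIV = 1"
proof -
  have "emeasure (sphere_measure :: 'a measure) UNIV = emeasure (unifB :: 'a measure) UNIV"
    using emeasure_sphere_cone[of "UNIV :: 'a set"] by simp
  then have "emeasure (sphere_measure :: 'a measure) UNIV = 1" using emeasure_unifB_space by simp
  then show ?thesis by (simp add: measure_def)
qed

lemma sphere_int_bound:
  fixes g :: "'a::euclidean_space \<Rightarrow> real"
  assumes g: "g \<in> borel_measurable borel" and B: "AE \<zeta> in (sphere_measure :: 'a measure). \<bar>g \<zeta>\<bar> \<le> B"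
  shows "integrable (sphere_measure :: 'a measure) g" "\<bar>integral\<^sup>L (sphere_measure :: 'a measure) g\<bar> \<le> B"
proof -
  interpret S: finite_measure "sphere_measure :: 'a measure" by (rule finite_measure_sphere)
  show ig: "integrable (sphere_measure :: 'a measure) g"
    by (rule S.integrable_const_bound[where B=B]) (use B g in auto)
  have "\<bar>integral\<^sup>L (sphere_measure :: 'a measure) g\<bar> \<le> integral\<^sup>L (sphere_measure :: 'a measure) (\<lambda>\<zeta>. \<bar>g \<zeta>\<bar>)"
    using integral_norm_bound[of "sphere_measure :: 'a measure" g] by simp
  also have "\<dots> \<le> integral\<^sup>L (sphere_measure :: 'a measure) (\<lambda>_. B)"
    by (rule integral_mono_AE) (use ig B in auto)
  also have "\<dots> = B" using measure_sphere_UNIV[where 'a='a] by simp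
  finally show "\<bar>integral\<^sup>L (sphere_measure :: 'a measure) g\<bar> \<le> B" .
qed

lemma sph_mean_mono:
  fixes u :: "'a::euclidean_space \<Rightarrow> real" and u1 u2 :: "'a \<Rightarrow> 'a \<Rightarrow> real"
  assumes uc: "continuous_on (ball 0 1) u" "\<And>v. v \<in> Basis \<Longrightarrow> continuous_on (ball 0 1) (u1 v)"
      "\<And>v. v \<in> Basis \<Longrightarrow> continuous_on (ball 0 1) (u2 v)"
    and ud1: "\<And>v x. v \<in> Basis \<Longrightarrow> x \<in> ball 0 1 \<Longrightarrow> ((\<lambda>t. u (x + t *\<^sub>R v)) has_real_derivative u1 v x) (at 0)"
    and ud2: "\<And>v x. v \<in> Basis \<Longrightarrow> x \<in> ball 0 1 \<Longrightarrow> ((\<lambda>t. u1 v (x + t *\<^sub>R v)) has_real_derivative u2 v x) (at 0)"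
    and lap: "\<And>x. x \<in> ball 0 1 \<Longrightarrow> (\<Sum>v\<in>Basis. u2 v x) \<ge> 0"
    and r: "0 < r1" "r1 < r2" "r2 < 1"
  shows "(\<integral>\<zeta>. indicator (ball 0 1) (r1 *\<^sub>R \<zeta>) * u (r1 *\<^sub>R \<zeta>) \<partial>(sphere_measure :: 'a measure))
       \<le> (\<integral>\<zeta>. indicator (ball 0 1) (r2 *\<^sub>R \<zeta>) * u (r2 *\<^sub>R \<zeta>) \<partial>(sphere_measure :: 'a measure))"
proof -
  define ut where "ut x = indicator (ball 0 1) x * u x" for x :: 'a
  define M where "M s = (\<integral>\<zeta>. ut (s *\<^sub>R \<zeta>) \<partial>(sphere_measure :: 'a measure))" for s
  interpret S: finite_measure "sphere_measure :: 'a measure" by (rule finite_measure_sphere)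
  have [measurable]: "ut \<in> borel_measurable borel"
    using borel_measurable_continuous_on_indicator[of "ball (0::'a) 1" u] uc(1) by (simp add: ut_def[abs_def])
  have Mm[measurable]: "M \<in> borel_measurable borel" unfolding M_def[abs_def] by measurable
  have Kc: "cball (0::'a) r2 \<subseteq> ball 0 1" using r by auto
  have ucK: "continuous_on (cball 0 r2) u" using continuous_on_subset[OF uc(1) Kc] .
  obtain Bu where Bu: "\<And>x. x \<in> cball 0 r2 \<Longrightarrow> \<bar>u x\<bar> \<le> Bu"
  proof -
    have "bounded (u ` cball 0 r2)" using ucK compact_continuous_image compact_imp_bounded compact_cball by blast
    then obtain B where "\<forall>x\<in>cball 0 r2. \<bar>u x\<bar> \<le> B" by (auto simp: bounded_iff)
    then show ?thesis using that by blast
  qed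
  have onS: "ut (s *\<^sub>R \<zeta>) = u (s *\<^sub>R \<zeta>) \<and> s *\<^sub>R \<zeta> \<in> cball 0 r2" if "norm \<zeta> = 1" "0 \<le> s" "s \<le> r2" for s \<zeta>
    using that r by (auto simp: ut_def)
  have Mbound: "\<bar>M s\<bar> \<le> Bu" if "0 \<le> s" "s \<le> r2" for s
    unfolding M_def
  proof (rule sphere_int_bound(2))
    show "(\<lambda>\<zeta>. ut (s *\<^sub>R \<zeta>)) \<in> borel_measurable borel" by measurable
    show "AE \<zeta> in sphere_measure. \<bar>ut (s *\<^sub>R \<zeta>)\<bar> \<le> Bu"
      using AE_sphere by (rule AE_mp) (use onS that Bu in auto)
  qed
  have Mcont: "\<exists>\<delta>>0. \<forall>s s'. 0 \<le> s \<longrightarrow> s \<le> r2 \<longrightarrow> 0 \<le> s' \<longrightarrow> s' \<le> r2 \<longrightarrow> \<bar>s - s'\<bar> < \<delta> \<longrightarrow> \<bar>M s - M s'\<bar> \<le> \<eta>"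
    if \<eta>: "\<eta> > 0" for \<eta>
  proof -
    have "uniformly_continuous_on (cball 0 r2) u" by (rule compact_uniformly_continuous[OF ucK compact_cball])
    then obtain \<delta> where \<delta>: "\<delta> > 0" "\<And>x y. x \<in> cball 0 r2 \<Longrightarrow> y \<in> cball 0 r2 \<Longrightarrow> dist y x < \<delta> \<Longrightarrow> dist (u y) (u x) < \<eta>"
      using \<eta> unfolding uniformly_continuous_on_def by metis
    show ?thesis
    proof (intro exI[of _ \<delta>] conjI allI impI \<delta>(1))
      fix s s' :: real
      assume ss: "0 \<le> s" "s \<le> r2" "0 \<le> s'" "s' \<le> r2" "\<bar>s - s'\<bar> < \<delta>"
      have i1: "integrable (sphere_measure :: 'a measure) (\<lambda>\<zeta>. ut (s *\<^sub>R \<zeta>))"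
        by (rule sphere_int_bound(1)[where B=Bu]) (measurable, use AE_sphere in \<open>rule AE_mp\<close>, use onS ss Bu in auto)
      have i2: "integrable (sphere_measure :: 'a measure) (\<lambda>\<zeta>. ut (s' *\<^sub>R \<zeta>))"
        by (rule sphere_int_bound(1)[where B=Bu]) (measurable, use AE_sphere in \<open>rule AE_mp\<close>, use onS ss Bu in auto)
      have "M s - M s' = (\<integral>\<zeta>. ut (s *\<^sub>R \<zeta>) - ut (s' *\<^sub>R \<zeta>) \<partial>(sphere_measure :: 'a measure))"
        unfolding M_def using i1 i2 by simp
      also have "\<bar>\<dots>\<bar> \<le> \<eta>"
      proof (rule sphere_int_bound(2))
        show "(\<lambda>\<zeta>. ut (s *\<^sub>R \<zeta>) - ut (s' *\<^sub>R \<zeta>)) \<in> borel_measurable borel" by measurable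
        show "AE \<zeta> in sphere_measure. \<bar>ut (s *\<^sub>R \<zeta>) - ut (s' *\<^sub>R \<zeta>)\<bar> \<le> \<eta>"
          using AE_sphere
        proof (rule AE_mp, intro AE_I2 impI)
          fix \<zeta> :: 'a assume n: "norm \<zeta> = 1"
          have "dist (s *\<^sub>R \<zeta>) (s' *\<^sub>R \<zeta>) = \<bar>s - s'\<bar>"
            using n by (simp add: dist_norm scaleR_diff_left[symmetric])
          then have "dist (u (s *\<^sub>R \<zeta>)) (u (s' *\<^sub>R \<zeta>)) < \<eta>"
            using \<delta>(2)[of "s' *\<^sub>R \<zeta>" "s *\<^sub>R \<zeta>"] onS[OF n] ss by auto
          then show "\<bar>ut (s *\<^sub>R \<zeta>) - ut (s' *\<^sub>R \<zeta>)\<bar> \<le> \<eta>"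
            using onS[OF n] ss by (simp add: dist_real_def)
        qed
      qed
      finally show "\<bar>M s - M s'\<bar> \<le> \<eta>" .
    qed
  qed
  show ?thesis
  proof (rule ccontr)
    assume "\<not> ?thesis"
    then have lt: "M r2 < M r1" by (simp add: M_def ut_def)
    define \<epsilon> where "\<epsilon> = (M r1 - M r2) / 3"
    have \<epsilon>: "\<epsilon> > 0" using lt by (simp add: \<epsilon>_def)
    obtain \<delta>0 where \<delta>0: "\<delta>0 > 0"
      "\<And>s s'. 0 \<le> s \<Longrightarrow> s \<le> r2 \<Longrightarrow> 0 \<le> s' \<Longrightarrow> s' \<le> r2 \<Longrightarrow> \<bar>s - s'\<bar> < \<delta>0 \<Longrightarrow> \<bar>M s - M s'\<bar> \<le> \<epsilon>"
      using Mcont[OF \<epsilon>] by blast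
    define \<delta> where "\<delta> = min (\<delta>0 / 2) ((r2 - r1) / 2)"
    have dle: "\<delta> \<le> (r2 - r1) / 2" "\<delta> \<le> \<delta>0 / 2" unfolding \<delta>_def
      by (rule min.cobounded2, rule min.cobounded1)
    have \<delta>: "\<delta> > 0" "2 * \<delta> \<le> r2 - r1" "\<delta> < \<delta>0"
      using \<delta>0 r dle by (auto simp: \<delta>_def)
    define c where "c = (r1 + r2) / 2"
    interpret R: radk "kf r1 r2 \<delta>" "kf' r1 r2 \<delta>" "DIM('a)" r1 r2
    proof
      show "(kf r1 r2 \<delta> has_real_derivative kf' r1 r2 \<delta> s) (at s)" for s by (rule kf_deriv[OF \<delta>(1,2)])
      show "continuous_on UNIV (kf' r1 r2 \<delta>)" by (rule kf'_cont[OF \<delta>(1,2)])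
      show "s \<le> r1 \<Longrightarrow> kf r1 r2 \<delta> s = 0 \<and> kf' r1 r2 \<delta> s = 0" for s by (rule kf_low[OF \<delta>(1,2)])
      show "s \<ge> r2 \<Longrightarrow> kf r1 r2 \<delta> s = 0 \<and> kf' r1 r2 \<delta> s = 0" for s by (rule kf_high[OF \<delta>(1,2)])
      show "kf r1 r2 \<delta> s \<ge> 0" for s by (rule kf_nonneg[OF \<delta>(1,2)])
    qed (use r in auto)
    have key: "integral\<^sup>L lborel (\<lambda>s. indicator {0..1} s * kf' r1 r2 \<delta> s * M s) \<le> 0"
      using R.key_ineq[OF refl uc ud1 ud2 lap] by (simp add: M_def ut_def)
    define A1 where "A1 = M r1 - \<epsilon>"
    define A2 where "A2 = M r2 + \<epsilon>"
    have cge: "r1 + \<delta> \<le> c" "r2 - \<delta> \<ge> c" using \<delta> by (auto simp: c_def field_simps)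
    have c01: "0 \<le> c" "c \<le> 1" using r by (auto simp: c_def)
    have kfc: "kf r1 r2 \<delta> c = 1" unfolding c_def by (rule kf_mid[OF \<delta>(1,2)])
    have kf0: "kf r1 r2 \<delta> 0 = 0" using kf_low[OF \<delta>(1,2), of 0] r by simp
    have kf1: "kf r1 r2 \<delta> 1 = 0" using kf_high[OF \<delta>(1,2), of 1] r by simp
    have vd: "(kf r1 r2 \<delta> has_vector_derivative kf' r1 r2 \<delta> x) (at x within S)" for x S
      using kf_deriv[OF \<delta>(1,2), of x]
      by (simp add: has_real_derivative_iff_has_vector_derivative has_vector_derivative_at_within)
    have kc: "continuous_on S (kf' r1 r2 \<delta>)" for S using kf'_cont[OF \<delta>(1,2)] continuous_on_subset by blast
    have f1: "integral\<^sup>L lborel (\<lambda>s. indicator {0..c} s *\<^sub>R kf' r1 r2 \<delta> s) = 1"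
      using integral_FTC_Icc[OF c01(1) vd kc] kfc kf0 by simp
    have f2: "integral\<^sup>L lborel (\<lambda>s. indicator {c..1} s *\<^sub>R kf' r1 r2 \<delta> s) = -1"
      using integral_FTC_Icc[OF c01(2) vd kc] kfc kf1 by simp
    have i1: "integrable lborel (\<lambda>s. indicator {0..c} s *\<^sub>R kf' r1 r2 \<delta> s)"
      by (rule borel_integrable_compact[OF compact_Icc kc])
    have i2: "integrable lborel (\<lambda>s. indicator {c..1} s *\<^sub>R kf' r1 r2 \<delta> s)"
      by (rule borel_integrable_compact[OF compact_Icc kc])
    have [measurable]: "kf' r1 r2 \<delta> \<in> borel_measurable borel"
      using kf'_cont[OF \<delta>(1,2)] by (rule borel_measurable_continuous_onI)
    have nz: "r1 < s \<and> s < r2" if "kf' r1 r2 \<delta> s \<noteq> 0" for s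
      using that kf_low[OF \<delta>(1,2), of s] kf_high[OF \<delta>(1,2), of s] by force
    have iu: "integrable lborel (\<lambda>s. indicator {0..1} s * kf' r1 r2 \<delta> s * M s)"
    proof (rule Bochner_Integration.integrable_bound)
      show "integrable lborel (\<lambda>s. indicator {0..1} s *\<^sub>R (\<bar>Bu\<bar> * kf' r1 r2 \<delta> s))"
        by (rule borel_integrable_compact[OF compact_Icc]) (intro continuous_intros kc)
      show "(\<lambda>s. indicator {0..1} s * kf' r1 r2 \<delta> s * M s) \<in> borel_measurable lborel" by measurable
      show "AE s in lborel. norm (indicator {0..1} s * kf' r1 r2 \<delta> s * M s)
          \<le> norm (indicator {0..1} s *\<^sub>R (\<bar>Bu\<bar> * kf' r1 r2 \<delta> s))"
      proof (intro AE_I2)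
        fix s :: real
        show "norm (indicator {0..1} s * kf' r1 r2 \<delta> s * M s) \<le> norm (indicator {0..1} s *\<^sub>R (\<bar>Bu\<bar> * kf' r1 r2 \<delta> s))"
        proof (cases "kf' r1 r2 \<delta> s = 0")
          case True then show ?thesis by simp
        next
          case False
          then have "r1 < s \<and> s < r2" by (rule nz)
          then have "\<bar>M s\<bar> \<le> \<bar>Bu\<bar>" using Mbound[of s] r by auto
          then have "\<bar>kf' r1 r2 \<delta> s\<bar> * \<bar>M s\<bar> \<le> \<bar>Bu\<bar> * \<bar>kf' r1 r2 \<delta> s\<bar>"
            using mult_right_mono[of "\<bar>M s\<bar>" "\<bar>Bu\<bar>" "\<bar>kf' r1 r2 \<delta> s\<bar>"] by (simp add: mult.commute)
          then show ?thesis by (auto simp: indicator_def abs_mult)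
        qed
      qed
    qed
    have pw: "A1 * (indicator {0..c} s *\<^sub>R kf' r1 r2 \<delta> s) + A2 * (indicator {c..1} s *\<^sub>R kf' r1 r2 \<delta> s)
        \<le> indicator {0..1} s * kf' r1 r2 \<delta> s * M s" for s
    proof (cases "kf' r1 r2 \<delta> s = 0")
      case True then show ?thesis by simp
    next
      case False
      then have sr: "r1 < s" "s < r2" using nz by auto
      show ?thesis
      proof (cases "s \<le> c")
        case True
        have near: "s < r1 + \<delta>" using kf'_left(2)[OF \<delta>(1,2), of s] True False unfolding c_def by force
        have "s \<noteq> c" using near cge by linarith
        then have ind: "indicator {0..c} s = (1::real)" "indicator {c..1} s = (0::real)" "indicator {0..1} s = (1::real)"
          using True sr r by (auto simp: indicator_def)
        have "\<bar>M s - M r1\<bar> \<le> \<epsilon>" using \<delta>0(2)[of s r1] sr near \<delta> r by auto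
        then have "A1 \<le> M s" by (simp add: A1_def)
        moreover have "kf' r1 r2 \<delta> s \<ge> 0" using kf'_left(1)[OF \<delta>(1,2), of s] True unfolding c_def by simp
        ultimately have "A1 * kf' r1 r2 \<delta> s \<le> M s * kf' r1 r2 \<delta> s" by (rule mult_right_mono)
        then show ?thesis unfolding ind by (simp add: mult.commute)
      next
        case False
        have near: "s > r2 - \<delta>" using kf'_right(2)[OF \<delta>(1,2), of s] False \<open>kf' r1 r2 \<delta> s \<noteq> 0\<close> unfolding c_def by force
        have ind: "indicator {0..c} s = (0::real)" "indicator {c..1} s = (1::real)" "indicator {0..1} s = (1::real)"
          using False sr r by (auto simp: indicator_def)
        have "\<bar>M s - M r2\<bar> \<le> \<epsilon>" using \<delta>0(2)[of s r2] sr near \<delta> r by auto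
        then have "M s \<le> A2" by (simp add: A2_def)
        moreover have "kf' r1 r2 \<delta> s \<le> 0" using kf'_right(1)[OF \<delta>(1,2), of s] False unfolding c_def by simp
        ultimately have "A2 * kf' r1 r2 \<delta> s \<le> M s * kf' r1 r2 \<delta> s" by (rule mult_right_mono_neg)
        then show ?thesis unfolding ind by (simp add: mult.commute)
      qed
    qed
    have "integral\<^sup>L lborel (\<lambda>s. A1 * (indicator {0..c} s *\<^sub>R kf' r1 r2 \<delta> s) + A2 * (indicator {c..1} s *\<^sub>R kf' r1 r2 \<delta> s))
        \<le> integral\<^sup>L lborel (\<lambda>s. indicator {0..1} s * kf' r1 r2 \<delta> s * M s)"
      by (rule integral_mono[OF _ iu pw]) (use i1 i2 in auto)
    moreover have "integral\<^sup>L lborel (\<lambda>s. A1 * (indicator {0..c} s *\<^sub>R kf' r1 r2 \<delta> s) + A2 * (indicator {c..1} s *\<^sub>R kf' r1 r2 \<delta> s))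
        = A1 - A2"
    proof -
      define g1 where "g1 s = indicator {0..c} s *\<^sub>R kf' r1 r2 \<delta> s" for s :: real
      define g2 where "g2 s = indicator {c..1} s *\<^sub>R kf' r1 r2 \<delta> s" for s :: real
      have j1: "integrable lborel g1" "integrable lborel g2" using i1 i2 by (simp_all add: g1_def[abs_def] g2_def[abs_def])
      have "integral\<^sup>L lborel (\<lambda>s. A1 * g1 s + A2 * g2 s) = integral\<^sup>L lborel (\<lambda>s. A1 * g1 s) + integral\<^sup>L lborel (\<lambda>s. A2 * g2 s)"
        by (rule Bochner_Integration.integral_add) (use j1 in auto)
      also have "\<dots> = A1 * integral\<^sup>L lborel g1 + A2 * integral\<^sup>L lborel g2" by simp
      also have "\<dots> = A1 - A2" using f1 f2 by (simp add: g1_def[abs_def] g2_def[abs_def])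
      finally show ?thesis by (simp add: g1_def g2_def)
    qed
    ultimately have "A1 - A2 \<le> 0" using key by linarith
    then show False using \<epsilon> by (simp add: A1_def A2_def \<epsilon>_def)
  qed
qed


lemma sum_Basis_cvec:
  "(\<Sum>v\<in>(Basis :: (complex^'n) set). g v) = (\<Sum>k\<in>UNIV. g (axis k 1) + g (axis k \<i>))"
proof -
  have B: "(Basis :: (complex^'n) set) = (\<lambda>(k, u). axis k u) ` (UNIV \<times> {1, \<i>})"
    by (auto simp: Basis_vec_def Basis_complex_def)
  have inj: "inj_on (\<lambda>(k, u). axis k u :: complex^'n) (UNIV \<times> {1, \<i>})"
    by (auto simp: inj_on_def axis_eq_axis)
  have "(\<Sum>v\<in>(Basis :: (complex^'n) set). g v) = (\<Sum>z\<in>UNIV \<times> {1, \<i>}. g ((\<lambda>(k, u). axis k u) z))"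
    unfolding B by (rule sum.reindex[OF inj, unfolded comp_def])
  also have "(\<lambda>z. g ((\<lambda>(k, u). axis k u) z)) = (\<lambda>(k, u). g (axis k u))" by auto
  also have "(\<Sum>z\<in>UNIV \<times> {1, \<i>}. (\<lambda>(k, u). g (axis k u)) z) = (\<Sum>k\<in>UNIV. \<Sum>u\<in>{1, \<i>}. g (axis k u))"
    by (rule sum.cartesian_product[symmetric])
  also have "\<dots> = (\<Sum>k\<in>UNIV. g (axis k 1) + g (axis k \<i>))"
    by (simp add: complex_eq_iff)
  finally show ?thesis .
qed

lemma line_vd:
  fixes f :: "'a::real_normed_vector \<Rightarrow> 'b::real_normed_vector"
  assumes "(f has_derivative blinfun_apply L) (at (x + t *\<^sub>R v))"
  shows "((\<lambda>s. f (x + s *\<^sub>R v)) has_vector_derivative blinfun_apply L v) (at t)"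
proof -
  have l: "((\<lambda>s. x + s *\<^sub>R v) has_derivative (\<lambda>h. h *\<^sub>R v)) (at t)"
    by (rule derivative_eq_intros refl)+ simp
  have "((f \<circ> (\<lambda>s. x + s *\<^sub>R v)) has_derivative (blinfun_apply L \<circ> (\<lambda>h. h *\<^sub>R v))) (at t)"
    by (rule diff_chain_at[OF l]) (simp add: assms)
  moreover have "(blinfun_apply L \<circ> (\<lambda>h. h *\<^sub>R v)) = (\<lambda>h. h *\<^sub>R blinfun_apply L v)"
    by (auto simp: fun_eq_iff blinfun.scaleR_right)
  ultimately show ?thesis by (simp add: has_vector_derivative_def comp_def)
qed

lemma line2_vd:
  fixes Df :: "'a::real_normed_vector \<Rightarrow> 'a \<Rightarrow>\<^sub>L 'b::real_normed_vector"
  assumes "(Df has_derivative blinfun_apply L) (at (x + t *\<^sub>R v))"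
  shows "((\<lambda>s. blinfun_apply (Df (x + s *\<^sub>R v)) w) has_vector_derivative blinfun_apply (blinfun_apply L v) w) (at t)"
proof -
  have "((\<lambda>s. Df (x + s *\<^sub>R v)) has_vector_derivative blinfun_apply L v) (at t)"
    by (rule line_vd[OF assms])
  from bounded_linear.has_vector_derivative[OF blinfun.bounded_linear_left this]
  show ?thesis .
qed

lemma dir_deriv2_eq:
  fixes f :: "'a::euclidean_space \<Rightarrow> 'b::real_normed_vector"
  assumes S: "open S" "x \<in> S"
    and d1: "\<And>y. y \<in> S \<Longrightarrow> (f has_derivative blinfun_apply (Df y)) (at y)"
    and d2: "\<And>y. y \<in> S \<Longrightarrow> (Df has_derivative blinfun_apply (D2f y)) (at y)"
  shows "dir_deriv2 f x v = blinfun_apply (blinfun_apply (D2f x) v) v"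
proof -
  define T where "T = (\<lambda>t::real. x + t *\<^sub>R v) -` S"
  have T: "open T" "0 \<in> T" unfolding T_def using S
    by (auto intro!: continuous_open_vimage continuous_intros)
  have eq: "vector_derivative (\<lambda>s. f (x + s *\<^sub>R v)) (at t) = blinfun_apply (Df (x + t *\<^sub>R v)) v" if "t \<in> T" for t
    by (rule vector_derivative_at[OF line_vd[OF d1]]) (use that T_def in auto)
  have "((\<lambda>t. blinfun_apply (Df (x + t *\<^sub>R v)) v) has_vector_derivative blinfun_apply (blinfun_apply (D2f x) v) v) (at 0)"
    using line2_vd[of Df "D2f x" x 0 v v] d2[OF S(2)] by simp
  then have "((\<lambda>t. vector_derivative (\<lambda>s. f (x + s *\<^sub>R v)) (at t)) has_vector_derivative blinfun_apply (blinfun_apply (D2f x) v) v) (at 0)"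
    by (rule has_vector_derivative_transform_within_open[OF _ T(1,2)]) (use eq in auto)
  then show ?thesis unfolding dir_deriv2_def by (rule vector_derivative_at)
qed


lemma vd_Re: "(F has_vector_derivative c) (at t) \<Longrightarrow> ((\<lambda>s. Re (F s)) has_real_derivative Re c) (at t)"
  using bounded_linear.has_vector_derivative[OF bounded_linear_Re]
  by (simp add: has_real_derivative_iff_has_vector_derivative)

lemma vd_Im: "(F has_vector_derivative c) (at t) \<Longrightarrow> ((\<lambda>s. Im (F s)) has_real_derivative Im c) (at t)"
  using bounded_linear.has_vector_derivative[OF bounded_linear_Im]
  by (simp add: has_real_derivative_iff_has_vector_derivative)

lemma ueps:
  fixes f :: "complex^'n \<Rightarrow> complex" and q \<epsilon> :: real
  assumes C2: "C2_on (ball 0 1) f"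
    and hyp: "\<forall>z\<in>ball 0 1. Re (f z * cnj (laplacian f z)) \<ge> 0"
    and q: "q \<ge> 1" and \<epsilon>: "\<epsilon> > 0"
  obtains u1 u2 :: "complex^'n \<Rightarrow> complex^'n \<Rightarrow> real" where
    "continuous_on (ball 0 1) (\<lambda>x. ((cmod (f x))\<^sup>2 + \<epsilon>) powr q)"
    "\<And>v. v \<in> Basis \<Longrightarrow> continuous_on (ball 0 1) (u1 v)"
    "\<And>v. v \<in> Basis \<Longrightarrow> continuous_on (ball 0 1) (u2 v)"
    "\<And>v x. v \<in> Basis \<Longrightarrow> x \<in> ball 0 1 \<Longrightarrow> ((\<lambda>t. ((cmod (f (x + t *\<^sub>R v)))\<^sup>2 + \<epsilon>) powr q) has_real_derivative u1 v x) (at 0)"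
    "\<And>v x. v \<in> Basis \<Longrightarrow> x \<in> ball 0 1 \<Longrightarrow> ((\<lambda>t. u1 v (x + t *\<^sub>R v)) has_real_derivative u2 v x) (at 0)"
    "\<And>x. x \<in> ball 0 1 \<Longrightarrow> (\<Sum>v\<in>Basis. u2 v x) \<ge> 0"
proof -
  obtain Df D2f where
    d1: "\<And>x. x \<in> ball 0 1 \<Longrightarrow> (f has_derivative blinfun_apply (Df x)) (at x)" and
    d2: "\<And>x. x \<in> ball 0 1 \<Longrightarrow> (Df has_derivative blinfun_apply (D2f x)) (at x)" and
    c2: "continuous_on (ball 0 1) D2f"
    using C2 unfolding C2_on_def by blast
  let ?S = "ball (0::complex^'n) 1"
  define a where "a x = Re (f x)" for x
  define b where "b x = Im (f x)" for x
  define A where "A v x = Re (blinfun_apply (Df x) v)" for v x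
  define B where "B v x = Im (blinfun_apply (Df x) v)" for v x
  define HA where "HA v x = Re (blinfun_apply (blinfun_apply (D2f x) v) v)" for v x
  define HB where "HB v x = Im (blinfun_apply (blinfun_apply (D2f x) v) v)" for v x
  define W where "W x = (a x)\<^sup>2 + (b x)\<^sup>2 + \<epsilon>" for x
  define W1 where "W1 v x = 2 * (a x * A v x + b x * B v x)" for v x
  define W2 where "W2 v x = 2 * ((A v x)\<^sup>2 + (B v x)\<^sup>2 + a x * HA v x + b x * HB v x)" for v x
  define u1 where "u1 v x = q * W x powr (q - 1) * W1 v x" for v x
  define u2 where "u2 v x = q * (q - 1) * W x powr (q - 2) * (W1 v x)\<^sup>2 + q * W x powr (q - 1) * W2 v x" for v x
  have Wpos: "W x > 0" for x using \<epsilon> by (simp add: W_def add_nonneg_pos)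
  have Wne: "W x \<noteq> 0" for x using Wpos[of x] by simp
  have cm: "(cmod (f x))\<^sup>2 + \<epsilon> = W x" for x
    by (simp add: W_def a_def b_def cmod_power2)
  have cf: "continuous_on ?S f"
    using d1 has_derivative_continuous continuous_at_imp_continuous_on by blast
  have cDf: "continuous_on ?S Df"
    using d2 has_derivative_continuous continuous_at_imp_continuous_on by blast
  have ca: "continuous_on ?S a" "continuous_on ?S b"
    unfolding a_def[abs_def] b_def[abs_def] using cf by (auto intro!: continuous_intros)
  have cA: "continuous_on ?S (A v)" "continuous_on ?S (B v)" for v
    unfolding A_def[abs_def] B_def[abs_def] using cDf by (auto intro!: continuous_intros)
  have cH: "continuous_on ?S (HA v)" "continuous_on ?S (HB v)" for v
    unfolding HA_def[abs_def] HB_def[abs_def] using c2 by (auto intro!: continuous_intros)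
  have cW: "continuous_on ?S W" unfolding W_def[abs_def] using ca by (auto intro!: continuous_intros)
  have fa: "((\<lambda>t. a (x + t *\<^sub>R v)) has_real_derivative A v x) (at 0)"
       "((\<lambda>t. b (x + t *\<^sub>R v)) has_real_derivative B v x) (at 0)" if "x \<in> ?S" for x v
    unfolding a_def b_def A_def B_def using line_vd[of f "Df x" x 0 v] d1[OF that]
    by (auto intro: vd_Re vd_Im)
  have fA: "((\<lambda>t. A v (x + t *\<^sub>R v)) has_real_derivative HA v x) (at 0)"
       "((\<lambda>t. B v (x + t *\<^sub>R v)) has_real_derivative HB v x) (at 0)" if "x \<in> ?S" for x v
    unfolding HA_def HB_def A_def B_def using line2_vd[of Df "D2f x" x 0 v v] d2[OF that]
    by (auto intro: vd_Re vd_Im)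
  have fW: "((\<lambda>t. W (x + t *\<^sub>R v)) has_real_derivative W1 v x) (at 0)" if "x \<in> ?S" for x v
    unfolding W_def[abs_def]
    by (rule derivative_eq_intros fa[OF that] refl)+ (simp add: W1_def algebra_simps)
  have fW1: "((\<lambda>t. W1 v (x + t *\<^sub>R v)) has_real_derivative W2 v x) (at 0)" if "x \<in> ?S" for x v
    unfolding W1_def[abs_def]
    by (rule derivative_eq_intros fa[OF that] fA[OF that] refl)+ (simp add: W2_def algebra_simps power2_eq_square)
  have fu: "((\<lambda>t. W (x + t *\<^sub>R v) powr q) has_real_derivative u1 v x) (at 0)" if "x \<in> ?S" for x v
  proof -
    have "((\<lambda>z. z powr q) has_real_derivative q * W (x + 0 *\<^sub>R v) powr (q - 1)) (at (W (x + 0 *\<^sub>R v)))"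
      by (rule has_real_derivative_powr) (rule Wpos)
    from DERIV_chain2[OF this fW[OF that]] show ?thesis by (simp add: u1_def)
  qed
  have fu1: "((\<lambda>t. u1 v (x + t *\<^sub>R v)) has_real_derivative u2 v x) (at 0)" if "x \<in> ?S" for x v
  proof -
    have p: "((\<lambda>z. z powr (q - 1)) has_real_derivative (q - 1) * W (x + 0 *\<^sub>R v) powr (q - 1 - 1)) (at (W (x + 0 *\<^sub>R v)))"
      by (rule has_real_derivative_powr) (rule Wpos)
    have w: "((\<lambda>t. W (x + t *\<^sub>R v) powr (q - 1)) has_real_derivative (q - 1) * W x powr (q - 2) * W1 v x) (at 0)"
      using DERIV_chain2[OF p fW[OF that]] by (simp add: algebra_simps)
    have "((\<lambda>t. q * W (x + t *\<^sub>R v) powr (q - 1) * W1 v (x + t *\<^sub>R v)) has_real_derivative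
        (q * ((q - 1) * W x powr (q - 2) * W1 v x)) * W1 v (x + 0 *\<^sub>R v) + W2 v x * (q * W (x + 0 *\<^sub>R v) powr (q - 1))) (at 0)"
      by (intro DERIV_mult DERIV_cmult w fW1[OF that])
    then show ?thesis unfolding u1_def[abs_def] u2_def by (simp add: algebra_simps power2_eq_square)
  qed
  have Lap: "laplacian f x = (\<Sum>v\<in>Basis. blinfun_apply (blinfun_apply (D2f x) v) v)" if "x \<in> ?S" for x
    unfolding laplacian_def sum_Basis_cvec using dir_deriv2_eq[OF open_ball that d1 d2] by simp
  show ?thesis
  proof (rule that[of u1 u2])
    show "continuous_on ?S (\<lambda>x. ((cmod (f x))\<^sup>2 + \<epsilon>) powr q)"
      unfolding cm using cW Wne by (intro continuous_intros) auto
    show "continuous_on ?S (u1 v)" for v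
      unfolding u1_def[abs_def] W1_def[abs_def] using cW Wne ca cA by (intro continuous_intros) auto
    show "continuous_on ?S (u2 v)" for v
      unfolding u2_def[abs_def] W1_def[abs_def] W2_def[abs_def] using cW Wne ca cA cH
      by (intro continuous_intros) auto
    show "((\<lambda>t. ((cmod (f (x + t *\<^sub>R v)))\<^sup>2 + \<epsilon>) powr q) has_real_derivative u1 v x) (at 0)"
      if "x \<in> ?S" for v x unfolding cm using fu[OF that] .
    show "((\<lambda>t. u1 v (x + t *\<^sub>R v)) has_real_derivative u2 v x) (at 0)" if "x \<in> ?S" for v x
      using fu1[OF that] .
    show "(\<Sum>v\<in>Basis. u2 v x) \<ge> 0" if x: "x \<in> ?S" for x
    proof -
      define L where "L = laplacian f x"
      have sHA: "(\<Sum>v\<in>Basis. HA v x) = Re L" "(\<Sum>v\<in>Basis. HB v x) = Im L"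
        unfolding L_def Lap[OF x] HA_def HB_def by (simp_all add: Re_sum Im_sum)
      have reL: "a x * Re L + b x * Im L \<ge> 0"
        using hyp x by (simp add: L_def a_def b_def)
      have "(\<Sum>v\<in>Basis. W2 v x) = 2 * (\<Sum>v\<in>Basis. (A v x)\<^sup>2 + (B v x)\<^sup>2) + 2 * (a x * (\<Sum>v\<in>Basis. HA v x) + b x * (\<Sum>v\<in>Basis. HB v x))"
        unfolding W2_def by (simp add: sum.distrib sum_distrib_left algebra_simps)
      also have "\<dots> \<ge> 0"
      proof -
        have "(\<Sum>v\<in>Basis. (A v x)\<^sup>2 + (B v x)\<^sup>2) \<ge> 0" by (intro sum_nonneg) auto
        then show ?thesis using reL unfolding sHA by (intro add_nonneg_nonneg) simp_all
      qed
      finally have sW2: "(\<Sum>v\<in>Basis. W2 v x) \<ge> 0" .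
      have "(\<Sum>v\<in>Basis. u2 v x) = (\<Sum>v\<in>Basis. q * (q - 1) * W x powr (q - 2) * (W1 v x)\<^sup>2) + q * W x powr (q - 1) * (\<Sum>v\<in>Basis. W2 v x)"
        unfolding u2_def by (simp add: sum.distrib sum_distrib_left)
      also have "\<dots> \<ge> 0"
      proof (rule add_nonneg_nonneg)
        show "(\<Sum>v\<in>Basis. q * (q - 1) * W x powr (q - 2) * (W1 v x)\<^sup>2) \<ge> 0"
          by (intro sum_nonneg mult_nonneg_nonneg) (use q in auto)
        show "q * W x powr (q - 1) * (\<Sum>v\<in>Basis. W2 v x) \<ge> 0" using q sW2 by simp
      qed
      finally show ?thesis .
    qed
  qed
qed


lemma powr_diff_bound:
  fixes y e q :: real
  assumes y: "0 \<le> y" and e: "0 < e" "e \<le> 1" and q: "1 \<le> q"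
  shows "y powr q \<le> (y + e) powr q" "(y + e) powr q \<le> y powr q + q * (y + 1) powr (q - 1) * e"
proof -
  show "y powr q \<le> (y + e) powr q" using y e q by (intro powr_mono2) auto
  show "(y + e) powr q \<le> y powr q + q * (y + 1) powr (q - 1) * e"
  proof (cases "y = 0")
    case True
    have "e powr q \<le> e" using e q by (intro powr_le_one_le) auto
    also have "e \<le> q * e" using e q by simp
    finally show ?thesis using True by simp
  next
    case False
    then have yp: "y > 0" using y by simp
    obtain z where z: "y < z" "z < y + e" "(y + e) powr q - y powr q = (y + e - y) * (q * z powr (q - 1))"
      using MVT2[of y "y + e" "\<lambda>z. z powr q" "\<lambda>z. q * z powr (q - 1)"] e yp
      by (metis has_real_derivative_powr less_add_same_cancel1 less_le_trans)
    have "z powr (q - 1) \<le> (y + 1) powr (q - 1)" using z e q yp by (intro powr_mono2) auto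
    then have "q * z powr (q - 1) * e \<le> q * (y + 1) powr (q - 1) * e" using q e by simp
    then show ?thesis using z(3) by (simp add: algebra_simps)
  qed
qed

lemma powr_sq:
  fixes x p :: real
  assumes "0 \<le> x" "p > 0"
  shows "(x\<^sup>2) powr (p / 2) = x powr p"
proof (cases "x = 0")
  case True then show ?thesis using assms by simp
next
  case False
  then have "x\<^sup>2 = x powr 2" using assms by simp
  then show ?thesis by (simp add: powr_powr)
qed

lemma scale_meas:
  fixes h :: "'a::euclidean_space \<Rightarrow> real"
  assumes "(\<lambda>\<zeta>. h (s *\<^sub>R \<zeta>)) \<in> borel_measurable borel" "s \<noteq> 0"
  shows "(\<lambda>\<zeta>. h (t *\<^sub>R \<zeta>)) \<in> borel_measurable borel"
proof -
  have "(\<lambda>\<zeta>. (\<lambda>\<zeta>. h (s *\<^sub>R \<zeta>)) ((t / s) *\<^sub>R \<zeta>)) \<in> borel_measurable borel"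
    by (rule measurable_compose[OF _ assms(1)]) measurable
  then show ?thesis using assms(2) by simp
qed

theorem lemma2p1:
  fixes f :: "complex ^ 'n \<Rightarrow> complex" and p :: real
  assumes "p \<ge> 2"
    and "C2_on (ball 0 1) f"
    and "\<forall>z\<in>ball 0 1. Re (f z * cnj (laplacian f z)) \<ge> 0"
  shows "mono_on {0<..<1} (\<lambda>r. Mp_pow p r f)"
proof (rule mono_onI)
  fix r1 r2 :: real
  assume r1: "r1 \<in> {0<..<1}" and r2: "r2 \<in> {0<..<1}" and le: "r1 \<le> r2"
  define h where "h x = cmod (f x) powr p" for x
  have Mp: "Mp_pow p r f = integral\<^sup>L (sphere_measure :: (complex^'n) measure) (\<lambda>\<zeta>. h (r *\<^sub>R \<zeta>))" for r
    by (simp add: Mp_pow_def h_def)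
  have msph: "measurable (sphere_measure :: (complex^'n) measure) borel = measurable borel borel"
    by (rule measurable_cong_sets) auto
  show "Mp_pow p r1 f \<le> Mp_pow p r2 f"
  proof (cases "r1 = r2")
    case True then show ?thesis by simp
  next
    case False
    then have r: "0 < r1" "r1 < r2" "r2 < 1" using r1 r2 le by auto
    show ?thesis
    proof (cases "(\<lambda>\<zeta>. h (r2 *\<^sub>R \<zeta>)) \<in> borel_measurable borel")
      case False
      then have F1: "(\<lambda>\<zeta>. h (r1 *\<^sub>R \<zeta>)) \<notin> borel_measurable borel"
        using scale_meas[of h r1 r2] r by auto
      have "\<not> integrable (sphere_measure :: (complex^'n) measure) (\<lambda>\<zeta>. h (r *\<^sub>R \<zeta>))"
        if "(\<lambda>\<zeta>. h (r *\<^sub>R \<zeta>)) \<notin> borel_measurable borel" for r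
        using that msph by (auto dest: borel_measurable_integrable)
      then show ?thesis using False F1 by (simp add: Mp not_integrable_integral_eq)
    next
      case True
      then have hm: "(\<lambda>\<zeta>. h (r *\<^sub>R \<zeta>)) \<in> borel_measurable borel" for r
        using scale_meas[of h r2 r] r by auto
      define q where "q = p / 2"
      have q: "q \<ge> 1" "p > 0" using assms(1) by (auto simp: q_def)
      obtain Df where d1: "\<And>x. x \<in> ball 0 1 \<Longrightarrow> (f has_derivative blinfun_apply (Df x)) (at x)"
        using assms(2) unfolding C2_on_def by blast
      have cf: "continuous_on (ball 0 1) f"
        using d1 has_derivative_continuous continuous_at_imp_continuous_on by blast
      have Kc: "cball (0::complex^'n) r2 \<subseteq> ball 0 1" using r by auto
      obtain A where A: "\<And>x. x \<in> cball 0 r2 \<Longrightarrow> (cmod (f x))\<^sup>2 \<le> A"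
      proof -
        have "continuous_on (cball 0 r2) (\<lambda>x. (cmod (f x))\<^sup>2)"
          using continuous_on_subset[OF cf Kc] by (intro continuous_intros)
        then have "bounded ((\<lambda>x. (cmod (f x))\<^sup>2) ` cball 0 r2)"
          using compact_continuous_image compact_imp_bounded compact_cball by blast
        then obtain B where "\<forall>x\<in>cball 0 r2. norm ((cmod (f x))\<^sup>2) \<le> B" by (auto simp: bounded_iff)
        then have "\<forall>x\<in>cball 0 r2. (cmod (f x))\<^sup>2 \<le> B" by simp
        then show ?thesis using that by blast
      qed
      have A0: "A \<ge> 0" using A[of 0] r by (smt (verit) centre_in_cball zero_le_power2)
      define C where "C = q * (A + 1) powr (q - 1)"
      have C0: "C \<ge> 0" using q by (simp add: C_def)
      define Me where "Me \<epsilon> r = (\<integral>\<zeta>. indicator (ball 0 1) (r *\<^sub>R \<zeta>) * ((cmod (f (r *\<^sub>R \<zeta>)))\<^sup>2 + \<epsilon>) powr q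
                 \<partial>(sphere_measure :: (complex^'n) measure))" for \<epsilon> r
      have mono: "Me \<epsilon> r1 \<le> Me \<epsilon> r2" if eps: "\<epsilon> > 0" for \<epsilon>
      proof -
        obtain u1 u2 where u: "continuous_on (ball 0 1) (\<lambda>x. ((cmod (f x))\<^sup>2 + \<epsilon>) powr q)"
          "\<And>v. v \<in> Basis \<Longrightarrow> continuous_on (ball 0 1) (u1 v)"
          "\<And>v. v \<in> Basis \<Longrightarrow> continuous_on (ball 0 1) (u2 v)"
          "\<And>v x. v \<in> Basis \<Longrightarrow> x \<in> ball 0 1 \<Longrightarrow> ((\<lambda>t. ((cmod (f (x + t *\<^sub>R v)))\<^sup>2 + \<epsilon>) powr q) has_real_derivative u1 v x) (at 0)"
          "\<And>v x. v \<in> Basis \<Longrightarrow> x \<in> ball 0 1 \<Longrightarrow> ((\<lambda>t. u1 v (x + t *\<^sub>R v)) has_real_derivative u2 v x) (at 0)"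
          "\<And>x. x \<in> ball 0 1 \<Longrightarrow> (\<Sum>v\<in>Basis. u2 v x) \<ge> 0"
          using ueps[OF assms(2) assms(3) q(1) eps] by blast
        show ?thesis unfolding Me_def
          by (rule sph_mean_mono[where u="\<lambda>x. ((cmod (f x))\<^sup>2 + \<epsilon>) powr q", OF u r])
      qed
      have onS: "r *\<^sub>R \<zeta> \<in> ball 0 1 \<and> r *\<^sub>R \<zeta> \<in> cball 0 r2" if "norm \<zeta> = 1" "0 < r" "r \<le> r2" for r and \<zeta> :: "complex^'n"
        using that r by auto
      have hq: "h x = ((cmod (f x))\<^sup>2) powr q" for x
        unfolding h_def q_def using powr_sq[of "cmod (f x)" p] q by simp
      have bounds: "Mp_pow p r f \<le> Me \<epsilon> r \<and> Me \<epsilon> r \<le> Mp_pow p r f + C * \<epsilon>"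
        if rr: "0 < r" "r \<le> r2" and e: "0 < \<epsilon>" "\<epsilon> \<le> 1" for r \<epsilon>
      proof -
        have uc: "continuous_on (ball 0 1) (\<lambda>x. ((cmod (f x))\<^sup>2 + \<epsilon>) powr q)"
        proof -
          have "(cmod (f x))\<^sup>2 + \<epsilon> \<noteq> 0" for x using e(1) by (metis add_nonneg_pos zero_le_power2 less_irrefl)
          then show ?thesis using cf by (intro continuous_intros) auto
        qed
        have mi: "(\<lambda>x. indicator (ball (0::complex^'n) 1) x * ((cmod (f x))\<^sup>2 + \<epsilon>) powr q) \<in> borel_measurable borel"
          using borel_measurable_continuous_on_indicator[OF _ uc] by simp
        have mi2: "(\<lambda>\<zeta>::complex^'n. indicator (ball 0 1) (r *\<^sub>R \<zeta>) * ((cmod (f (r *\<^sub>R \<zeta>)))\<^sup>2 + \<epsilon>) powr q) \<in> borel_measurable borel"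
          by (rule measurable_compose[OF _ mi]) measurable
        have pw: "h (r *\<^sub>R \<zeta>) \<le> indicator (ball 0 1) (r *\<^sub>R \<zeta>) * ((cmod (f (r *\<^sub>R \<zeta>)))\<^sup>2 + \<epsilon>) powr q
             \<and> indicator (ball 0 1) (r *\<^sub>R \<zeta>) * ((cmod (f (r *\<^sub>R \<zeta>)))\<^sup>2 + \<epsilon>) powr q \<le> h (r *\<^sub>R \<zeta>) + C * \<epsilon>
             \<and> \<bar>h (r *\<^sub>R \<zeta>)\<bar> \<le> (A + 1) powr q
             \<and> \<bar>indicator (ball 0 1) (r *\<^sub>R \<zeta>) * ((cmod (f (r *\<^sub>R \<zeta>)))\<^sup>2 + \<epsilon>) powr q\<bar> \<le> (A + 1) powr q"
          if n: "norm \<zeta> = 1" for \<zeta> :: "complex^'n"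
        proof -
          let ?y = "(cmod (f (r *\<^sub>R \<zeta>)))\<^sup>2"
          have ind: "indicator (ball (0::complex^'n) 1) (r *\<^sub>R \<zeta>) = (1::real)" using onS[OF n rr] by simp
          have yA: "?y \<le> A" using A onS[OF n rr] by blast
          have b1: "?y powr q \<le> (?y + \<epsilon>) powr q" "(?y + \<epsilon>) powr q \<le> ?y powr q + q * (?y + 1) powr (q - 1) * \<epsilon>"
            using powr_diff_bound[of ?y \<epsilon> q] e q by auto
          have "q * (?y + 1) powr (q - 1) * \<epsilon> \<le> C * \<epsilon>"
            unfolding C_def using yA q e by (intro mult_right_mono mult_left_mono powr_mono2) auto
          moreover have "(?y + \<epsilon>) powr q \<le> (A + 1) powr q" using yA e q by (intro powr_mono2) auto
          moreover have "?y powr q \<le> (A + 1) powr q" using yA e q by (intro powr_mono2) auto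
          ultimately show ?thesis using b1 unfolding ind hq by auto
        qed
        have ih: "integrable (sphere_measure :: (complex^'n) measure) (\<lambda>\<zeta>. h (r *\<^sub>R \<zeta>))"
          by (rule sphere_int_bound(1)[where B="(A + 1) powr q"]) (use hm pw AE_sphere in \<open>auto elim: AE_mp\<close>)
        have ie: "integrable (sphere_measure :: (complex^'n) measure) (\<lambda>\<zeta>. indicator (ball 0 1) (r *\<^sub>R \<zeta>) * ((cmod (f (r *\<^sub>R \<zeta>)))\<^sup>2 + \<epsilon>) powr q)"
          by (rule sphere_int_bound(1)[where B="(A + 1) powr q"]) (use mi2 pw AE_sphere in \<open>auto elim: AE_mp\<close>)
        interpret S: finite_measure "sphere_measure :: (complex^'n) measure" by (rule finite_measure_sphere)
        have ihc: "integrable (sphere_measure :: (complex^'n) measure) (\<lambda>\<zeta>. h (r *\<^sub>R \<zeta>) + C * \<epsilon>)"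
          by (rule Bochner_Integration.integrable_add[OF ih S.integrable_const])
        have "Mp_pow p r f \<le> Me \<epsilon> r"
          unfolding Mp Me_def by (rule integral_mono_AE[OF ih ie]) (use pw AE_sphere in \<open>auto elim: AE_mp\<close>)
        moreover have "Me \<epsilon> r \<le> integral\<^sup>L (sphere_measure :: (complex^'n) measure) (\<lambda>\<zeta>. h (r *\<^sub>R \<zeta>) + C * \<epsilon>)"
          unfolding Me_def by (rule integral_mono_AE[OF ie ihc]) (use pw AE_sphere in \<open>auto elim: AE_mp\<close>)
        moreover have "integral\<^sup>L (sphere_measure :: (complex^'n) measure) (\<lambda>\<zeta>. h (r *\<^sub>R \<zeta>) + C * \<epsilon>) = Mp_pow p r f + C * \<epsilon>"
        proof -
          show ?thesis unfolding Mp using ih measure_sphere_UNIV[where 'a="complex^'n"] by simp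
        qed
        ultimately show ?thesis by simp
      qed
      show ?thesis
      proof (rule field_le_epsilon)
        fix e :: real assume e: "e > 0"
        define \<epsilon> where "\<epsilon> = min 1 (e / (C + 1))"
        have \<epsilon>: "0 < \<epsilon>" "\<epsilon> \<le> 1" "\<epsilon> \<le> e / (C + 1)" using e C0 by (auto simp: \<epsilon>_def)
        have "C * \<epsilon> \<le> C * (e / (C + 1))" using \<epsilon> C0 by (intro mult_left_mono) auto
        also have "\<dots> \<le> e" using C0 e by (simp add: field_simps)
        finally have Ce: "C * \<epsilon> \<le> e" .
        have "Mp_pow p r1 f \<le> Me \<epsilon> r1" using bounds[of r1 \<epsilon>] r \<epsilon> by auto
        also have "\<dots> \<le> Me \<epsilon> r2" using mono \<epsilon> by auto
        also have "\<dots> \<le> Mp_pow p r2 f + C * \<epsilon>" using bounds[of r2 \<epsilon>] r \<epsilon> by auto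
        finally show "Mp_pow p r1 f \<le> Mp_pow p r2 f + e" using Ce by linarith
      qed
    qed
  qed
qed


end
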